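(* Let $f\in\mathbb{R}[x]$, $G\in\mathcal{S}^m\mathbb{R}[x]$, and consider $\min f(x)$ s.t. $G(x)\succeq0$ with feasible set $S(G)=\{x\in\mathbb{R}^n:G(x)\succeq0\}$ and optimal value $f_{\min}$. Suppose $u$ is a local minimizer at which the nondegeneracy condition, strict complementarity condition and second order sufficient condition hold. Then there exist a neighborhood $U$ of $u$ and an element $a_u\in\mathrm{QM}[G]$ such that $$\{x\in\mathbb{R}^n:a_u(x)\ge0\}\cap V_{\mathbb{R}}(f-f_{\min})\cap U\subset S(G).$$
   Context: $V_{\mathbb{R}}(f-f_{\min})=\{x\in\mathbb{R}^n:f(x)=f_{\min}\}$. $\mathrm{QM}[G]=\{\sigma+\sum_{t=1}^r v_t^TGv_t:\sigma\text{ SOS in }\mathbb{R}[x],\ v_t\in\mathbb{R}[x]^m,\ r\in\mathbb{N}\}$. Optimality conditions at feasible $u$: $\nabla G(u)[d]=\sum_id_i\partial_{x_i}G(u)$, $\nabla G(u)^*[X]=(\langle\partial_{x_i}G(u),X\rangle)_i$, $\langle W,Y\rangle=\mathrm{tr}(WY^T)$; $E$ has columns forming a basis of $\ker G(u)$. NDC: $\mathrm{Im}\,\nabla G(u)+\{N\in\mathcal{S}^m:E^TNE=0\}=\mathcal{S}^m$. Under NDC at a local minimizer there is a unique $\Lambda\in\mathcal{S}^m$ with $\nabla f(u)-\nabla G(u)^*[\Lambda]=0$, $\Lambda\succeq0$, $\langle\Lambda,G(u)\rangle=0$. SCC: $\mathrm{rank}\,G(u)+\mathrm{rank}\,\Lambda=m$.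 SOSC: $h^T(\nabla^2L(u,\Lambda)+H(u,\Lambda))h>0$ for all $0\ne h$ with $\sum_ih_iE^T\partial_{x_i}G(u)E=0$, where $L(x,\Lambda)=f-\langle\Lambda,G\rangle$ and $H(x,Q)_{ij}=2\langle Q,\partial_{x_i}G(x)G(x)^\dagger\partial_{x_j}G(x)\rangle$ ($\dagger$ = Moore–Penrose inverse). *)

theory Defs
  imports "HOL-Analysis.Analysis"
begin

inductive_set polyfun :: "(real^'n \<Rightarrow> real) set" where
  pconst: "(\<lambda>x. c) \<in> polyfun"
| pvar: "(\<lambda>x. x $ i) \<in> polyfun"
| padd: "p \<in> polyfun \<Longrightarrow> q \<in> polyfun \<Longrightarrow> (\<lambda>x. p x + q x) \<in> polyfun"
| pmult: "p \<in> polyfun \<Longrightarrow> q \<in> polyfun \<Longrightarrow> (\<lambda>x. p x * q x) \<in> polyfun"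

definition sym_mat :: "real^'m^'m \<Rightarrow> bool" where
  "sym_mat A \<longleftrightarrow> transpose A = A"

definition polymat_sym :: "(real^'n \<Rightarrow> real^'m^'m) \<Rightarrow> bool" where
  "polymat_sym G \<longleftrightarrow> (\<forall>k l. (\<lambda>x. G x $ k $ l) \<in> polyfun) \<and> (\<forall>x. sym_mat (G x))"

definition psd :: "real^'m^'m \<Rightarrow> bool" where
  "psd A \<longleftrightarrow> sym_mat A \<and> (\<forall>v. v \<bullet> (A *v v) \<ge> 0)"

definition feas :: "(real^'n \<Rightarrow> real^'m^'m) \<Rightarrow> (real^'n) set" where
  "feas G = {x. psd (G x)}"

definition SOS :: "(real^'n \<Rightarrow> real) set" where
  "SOS = {s. \<exists>r q. (\<forall>t<r. q t \<in> polyfun) \<and> s = (\<lambda>x. \<Sum>t<(r::nat). (q t x)\<^sup>2)}"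

definition QM :: "(real^'n \<Rightarrow> real^'m^'m) \<Rightarrow> (real^'n \<Rightarrow> real) set" where
  "QM G = {a. \<exists>\<sigma> r v. \<sigma> \<in> SOS \<and> (\<forall>t<(r::nat). \<forall>k. (\<lambda>x. v t x $ k) \<in> polyfun) \<and>
             a = (\<lambda>x. \<sigma> x + (\<Sum>t<r. v t x \<bullet> (G x *v v t x)))}"

definition partial :: "'n \<Rightarrow> (real^'n \<Rightarrow> real) \<Rightarrow> real^'n \<Rightarrow> real" where
  "partial i p x = deriv (\<lambda>t. p (x + t *\<^sub>R axis i 1)) 0"

definition mpartial :: "'n \<Rightarrow> (real^'n \<Rightarrow> real^'m^'m) \<Rightarrow> real^'n \<Rightarrow> real^'m^'m" where
  "mpartial i G x = (\<chi> k l. partial i (\<lambda>y. G y $ k $ l) x)"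

definition grad :: "(real^'n \<Rightarrow> real) \<Rightarrow> real^'n \<Rightarrow> real^'n" where
  "grad p x = (\<chi> i. partial i p x)"

definition hess :: "(real^'n \<Rightarrow> real) \<Rightarrow> real^'n \<Rightarrow> real^'n^'n" where
  "hess p x = (\<chi> i j. partial j (partial i p) x)"

definition frob :: "real^'m^'m \<Rightarrow> real^'m^'m \<Rightarrow> real" where
  "frob W Y = trace (W ** transpose Y)"

definition mp_inv :: "real^'m^'m \<Rightarrow> real^'m^'m" where
  "mp_inv A = (THE X. A ** X ** A = A \<and> X ** A ** X = X \<and>
                      transpose (A ** X) = A ** X \<and> transpose (X ** A) = X ** A)"

definition local_minimizer ::
  "(real^'n \<Rightarrow> real) \<Rightarrow> (real^'n \<Rightarrow> real^'m^'m) \<Rightarrow> real^'n \<Rightarrow> bool" where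
  "local_minimizer f G u \<longleftrightarrow> u \<in> feas G \<and>
     (\<exists>e>0. \<forall>x\<in>feas G. dist x u < e \<longrightarrow> f u \<le> f x)"

definition fmin :: "(real^'n \<Rightarrow> real) \<Rightarrow> (real^'n \<Rightarrow> real^'m^'m) \<Rightarrow> real" where
  "fmin f G = Inf (f ` feas G)"

definition kernel_cols :: "real^'m^'m \<Rightarrow> real^'m^'m \<Rightarrow> bool" where
  "kernel_cols A E \<longleftrightarrow> range (\<lambda>y. E *v y) = {w. A *v w = 0}"

definition NDC :: "(real^'n \<Rightarrow> real^'m^'m) \<Rightarrow> real^'n \<Rightarrow> real^'m^'m \<Rightarrow> bool" where
  "NDC G u E \<longleftrightarrow> (\<forall>M. sym_mat M \<longrightarrow> (\<exists>d N. sym_mat N \<and> transpose E ** N ** E = 0 \<and>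
       M = (\<Sum>i\<in>UNIV. d $ i *\<^sub>R mpartial i G u) + N))"

definition KKT :: "(real^'n \<Rightarrow> real) \<Rightarrow> (real^'n \<Rightarrow> real^'m^'m) \<Rightarrow> real^'n \<Rightarrow> real^'m^'m \<Rightarrow> bool" where
  "KKT f G u \<Lambda> \<longleftrightarrow> sym_mat \<Lambda> \<and> grad f u - (\<chi> i. frob (mpartial i G u) \<Lambda>) = 0 \<and>
      psd \<Lambda> \<and> frob \<Lambda> (G u) = 0"

definition SCC :: "(real^'n \<Rightarrow> real^'m^'m) \<Rightarrow> real^'n \<Rightarrow> real^'m^'m \<Rightarrow> bool" where
  "SCC G u \<Lambda> \<longleftrightarrow> rank (G u) + rank \<Lambda> = CARD('m)"

definition Lag :: "(real^'n \<Rightarrow> real) \<Rightarrow> (real^'n \<Rightarrow> real^'m^'m) \<Rightarrow> real^'m^'m \<Rightarrow> real^'n \<Rightarrow> real" where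
  "Lag f G \<Lambda> x = f x - frob \<Lambda> (G x)"

definition Hterm :: "(real^'n \<Rightarrow> real^'m^'m) \<Rightarrow> real^'n \<Rightarrow> real^'m^'m \<Rightarrow> real^'n^'n" where
  "Hterm G x Q = (\<chi> i j. 2 * frob Q (mpartial i G x ** mp_inv (G x) ** mpartial j G x))"

definition SOSC :: "(real^'n \<Rightarrow> real) \<Rightarrow> (real^'n \<Rightarrow> real^'m^'m) \<Rightarrow> real^'n \<Rightarrow> real^'m^'m \<Rightarrow> real^'m^'m \<Rightarrow> bool" where
  "SOSC f G u \<Lambda> E \<longleftrightarrow> (\<forall>h. h \<noteq> 0 \<longrightarrow>
      (\<Sum>i\<in>UNIV. h $ i *\<^sub>R (transpose E ** mpartial i G u ** E)) = 0 \<longrightarrow>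
      h \<bullet> ((hess (Lag f G \<Lambda>) u + Hterm G u \<Lambda>) *v h) > 0)"

end

theory Submission
  imports Defs
begin

lemma polyfun_deriv:
  assumes "p \<in> polyfun"
  shows "\<exists>D. (\<forall>i. D i \<in> polyfun) \<and> (\<forall>x. (p has_derivative (\<lambda>v. \<Sum>i\<in>UNIV. v$i * D i x)) (at x))"
  using assms
proof (induction rule: polyfun.induct)
  case (pconst c)
  show ?case
    by (rule exI[of _ "\<lambda>i x. 0"]) (auto intro: polyfun.pconst)
next
  case (pvar j)
  have e: "(\<lambda>v::real^'a. \<Sum>i\<in>UNIV. v$i * (if i = j then 1 else 0)) = (\<lambda>v. v$j)"
    by (auto simp: if_distrib cong: if_cong)
  have d: "((\<lambda>x::real^'a. x$j) has_derivative (\<lambda>v. v$j)) (at x)" for x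
    by (rule bounded_linear_imp_has_derivative) (rule bounded_linear_vec_nth)
  have pc: "(\<lambda>x::real^'a. if i = j then 1 else 0) \<in> polyfun" for i
    by (rule polyfun.pconst)
  show ?case
    by (rule exI[of _ "\<lambda>i x. if i = j then 1 else 0"]) (simp only: e d pc simp_thms all_simps)
next
  case (padd p q)
  then obtain Dp Dq where p: "\<forall>i. Dp i \<in> polyfun" "\<forall>x. (p has_derivative (\<lambda>v. \<Sum>i\<in>UNIV. v$i * Dp i x)) (at x)"
    and q: "\<forall>i. Dq i \<in> polyfun" "\<forall>x. (q has_derivative (\<lambda>v. \<Sum>i\<in>UNIV. v$i * Dq i x)) (at x)" by blast
  show ?case
  proof (rule exI[of _ "\<lambda>i x. Dp i x + Dq i x"], intro conjI allI)
    fix i show "(\<lambda>x. Dp i x + Dq i x) \<in> polyfun" using p q by (auto intro: polyfun.padd)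
  next
    fix x
    have "((\<lambda>x. p x + q x) has_derivative (\<lambda>v. (\<Sum>i\<in>UNIV. v$i * Dp i x) + (\<Sum>i\<in>UNIV. v$i * Dq i x))) (at x)"
      using p q by (auto intro: has_derivative_add)
    then show "((\<lambda>x. p x + q x) has_derivative (\<lambda>v. \<Sum>i\<in>UNIV. v$i * (Dp i x + Dq i x))) (at x)"
      by (simp add: distrib_left sum.distrib)
  qed
next
  case (pmult p q)
  then obtain Dp Dq where p: "\<forall>i. Dp i \<in> polyfun" "\<forall>x. (p has_derivative (\<lambda>v. \<Sum>i\<in>UNIV. v$i * Dp i x)) (at x)"
    and q: "\<forall>i. Dq i \<in> polyfun" "\<forall>x. (q has_derivative (\<lambda>v. \<Sum>i\<in>UNIV. v$i * Dq i x)) (at x)" by blast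
  show ?case
  proof (rule exI[of _ "\<lambda>i x. Dp i x * q x + p x * Dq i x"], intro conjI allI)
    fix i show "(\<lambda>x. Dp i x * q x + p x * Dq i x) \<in> polyfun" using p q pmult
      by (auto intro!: polyfun.padd polyfun.pmult)
  next
    fix x
    have "((\<lambda>x. p x * q x) has_derivative (\<lambda>v. p x * (\<Sum>i\<in>UNIV. v$i * Dq i x) + (\<Sum>i\<in>UNIV. v$i * Dp i x) * q x)) (at x)"
      using p q by (auto intro: has_derivative_mult)
    then show "((\<lambda>x. p x * q x) has_derivative (\<lambda>v. \<Sum>i\<in>UNIV. v$i * (Dp i x * q x + p x * Dq i x))) (at x)"
      by (simp add: distrib_left sum.distrib sum_distrib_left sum_distrib_right algebra_simps)
  qed
qed


lemma line_deriv:
  assumes "\<And>y. (p has_derivative (\<lambda>v. \<Sum>i\<in>UNIV. v$i * D i y)) (at y)"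
  shows "((\<lambda>t. p (x + t *\<^sub>R v)) has_real_derivative (\<Sum>i\<in>UNIV. v$i * D i (x + t *\<^sub>R v))) (at t)"
proof -
  have l: "((\<lambda>t. x + t *\<^sub>R v) has_derivative (\<lambda>s. s *\<^sub>R v)) (at t)"
    by (auto intro!: derivative_eq_intros)
  have "((\<lambda>t. p (x + t *\<^sub>R v)) has_derivative (\<lambda>s. \<Sum>i\<in>UNIV. (s *\<^sub>R v)$i * D i (x + t *\<^sub>R v))) (at t)"
    using has_derivative_compose[OF l assms] by (simp add: o_def)
  moreover have "(\<lambda>s. \<Sum>i\<in>UNIV. (s *\<^sub>R v)$i * D i (x + t *\<^sub>R v)) = (\<lambda>s. s * (\<Sum>i\<in>UNIV. v$i * D i (x + t *\<^sub>R v)))"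
    by (auto simp: sum_distrib_left mult.assoc)
  moreover have "(\<lambda>s. s * (\<Sum>i\<in>UNIV. v$i * D i (x + t *\<^sub>R v))) = (*) (\<Sum>i\<in>UNIV. v$i * D i (x + t *\<^sub>R v))"
    by (auto simp: fun_eq_iff mult.commute)
  ultimately show ?thesis
    by (simp add: has_field_derivative_def)
qed

lemma partial_eqD:
  assumes "\<And>y. (p has_derivative (\<lambda>v. \<Sum>i\<in>UNIV. v$i * D i y)) (at y)"
  shows "partial i p x = D i x"
proof -
  have "((\<lambda>t. p (x + t *\<^sub>R axis i 1)) has_real_derivative (\<Sum>j\<in>UNIV. axis i 1$j * D j (x + 0 *\<^sub>R axis i 1))) (at 0)"
    by (rule line_deriv[OF assms])
  moreover have "(\<Sum>j\<in>UNIV. axis i 1$j * D j (x + 0 *\<^sub>R axis i (1::real))) = D i x"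
  proof -
    have "axis i 1$j * D j x = (if j = i then D i x else 0)" for j
      by (simp add: axis_def)
    then show ?thesis by simp
  qed
  ultimately show ?thesis unfolding partial_def by (simp add: DERIV_imp_deriv)
qed

lemma polyfun_partial:
  assumes "p \<in> polyfun"
  shows "partial i p \<in> polyfun"
    and "((\<lambda>t. p (x + t *\<^sub>R v)) has_real_derivative (\<Sum>i\<in>UNIV. v$i * partial i p (x + t *\<^sub>R v))) (at t)"
    and "(p has_derivative (\<lambda>v. \<Sum>i\<in>UNIV. v$i * partial i p y)) (at y)"
proof -
  obtain D where D: "\<And>i. D i \<in> polyfun" "\<And>y. (p has_derivative (\<lambda>v. \<Sum>i\<in>UNIV. v$i * D i y)) (at y)"
    using polyfun_deriv[OF assms] by blast
  have e: "partial i p = D i" for i using partial_eqD[OF D(2)] by blast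
  show "partial i p \<in> polyfun" using D e by simp
  show "((\<lambda>t. p (x + t *\<^sub>R v)) has_real_derivative (\<Sum>i\<in>UNIV. v$i * partial i p (x + t *\<^sub>R v))) (at t)"
    using line_deriv[OF D(2)] e by simp
  show "(p has_derivative (\<lambda>v. \<Sum>i\<in>UNIV. v$i * partial i p y)) (at y)"
    using D(2) e by simp
qed

lemma polyfun_isCont: "p \<in> polyfun \<Longrightarrow> isCont p x"
  by (rule has_derivative_continuous[OF polyfun_partial(3)])

lemma polyfun_cont: "p \<in> polyfun \<Longrightarrow> continuous_on UNIV p"
  by (simp add: continuous_at_imp_continuous_on polyfun_isCont)


definition g1fun :: "(real^'n \<Rightarrow> real) \<Rightarrow> real^'n \<Rightarrow> real^'n \<Rightarrow> real" where
  "g1fun p d y = (\<Sum>i\<in>UNIV. d$i * partial i p y)"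

definition g2fun :: "(real^'n \<Rightarrow> real) \<Rightarrow> real^'n \<Rightarrow> real^'n \<Rightarrow> real" where
  "g2fun p d y = (\<Sum>i\<in>UNIV. d$i * (\<Sum>j\<in>UNIV. d$j * partial j (partial i p) y))"

lemma g1_deriv:
  assumes "p \<in> polyfun"
  shows "((\<lambda>t. g1fun p d (u + t *\<^sub>R d)) has_real_derivative g2fun p d (u + t *\<^sub>R d)) (at t)"
  unfolding g1fun_def g2fun_def
  by (intro DERIV_sum DERIV_cmult polyfun_partial(2) polyfun_partial(1) assms)

lemma line_taylor2:
  assumes "p \<in> polyfun"
  shows "\<exists>t. 0 < t \<and> t < 1 \<and> p (u + d) = p u + g1fun p d u + g2fun p d (u + t *\<^sub>R d) / 2"
proof -
  define df where "df m = (if m = 0 then (\<lambda>t. p (u + t *\<^sub>R d)) else if m = 1 then (\<lambda>t. g1fun p d (u + t *\<^sub>R d))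
     else (\<lambda>t. g2fun p d (u + t *\<^sub>R d)))" for m :: nat
  have "\<forall>m t. m < 2 \<and> 0 \<le> t \<and> t \<le> 1 \<longrightarrow> DERIV (df m) t :> df (Suc m) t"
  proof (intro allI impI)
    fix m :: nat and t :: real assume "m < 2 \<and> 0 \<le> t \<and> t \<le> 1"
    then have "m = 0 \<or> m = 1" by auto
    then show "DERIV (df m) t :> df (Suc m) t"
    proof
      assume "m = 0" then show ?thesis
        using polyfun_partial(2)[OF assms, of u d t] by (simp add: df_def g1fun_def)
    next
      assume "m = 1" then show ?thesis
        using g1_deriv[OF assms, of d u t] by (simp add: df_def)
    qed
  qed
  from Maclaurin[of 1 2 df "\<lambda>t. p (u + t *\<^sub>R d)", OF _ _ _ this]
  obtain t where "0 < t" "t < 1"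
    "p (u + d) = (\<Sum>m<2. df m 0 / fact m * 1 ^ m) + df 2 t / fact 2 * 1 ^ 2"
    by (auto simp: df_def)
  moreover have "(\<Sum>m<2. df m 0 / fact m * 1 ^ m) = p u + g1fun p d u"
    by (simp add: numeral_2_eq_2 df_def)
  moreover have "df 2 t / fact 2 * 1 ^ 2 = g2fun p d (u + t *\<^sub>R d) / 2"
    by (simp add: df_def)
  ultimately show ?thesis by auto
qed

lemma line_taylor1:
  assumes "p \<in> polyfun"
  shows "\<exists>t. 0 < t \<and> t < 1 \<and> p (u + d) = p u + g1fun p d (u + t *\<^sub>R d)"
proof -
  define df where "df m = (if m = 0 then (\<lambda>t. p (u + t *\<^sub>R d)) else (\<lambda>t. g1fun p d (u + t *\<^sub>R d)))" for m :: nat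
  have "\<forall>m t. m < 1 \<and> 0 \<le> t \<and> t \<le> 1 \<longrightarrow> DERIV (df m) t :> df (Suc m) t"
    using polyfun_partial(2)[OF assms, of u d] by (simp add: df_def g1fun_def)
  from Maclaurin[of 1 1 df "\<lambda>t. p (u + t *\<^sub>R d)", OF _ _ _ this]
  obtain t where "0 < t" "t < 1"
    "p (u + d) = (\<Sum>m<1. df m 0 / fact m * 1 ^ m) + df 1 t / fact 1 * 1 ^ 1"
    by (auto simp: df_def)
  then show ?thesis by (auto simp: df_def)
qed


lemma abs_comp1: "\<bar>(d::real^'n)$i * X\<bar> \<le> norm d * \<bar>X\<bar>"
  unfolding abs_mult by (intro mult_right_mono component_le_norm_cart) auto
lemma abs_comp2: "\<bar>(d::real^'n)$i * d$j * X\<bar> \<le> norm d * norm d * \<bar>X\<bar>"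
  unfolding abs_mult by (intro mult_right_mono mult_mono component_le_norm_cart) auto

lemma cont_small:
  assumes "isCont F u" "F u = 0" "e > 0"
  shows "\<exists>\<delta>>0. \<forall>y. norm (y - u) < \<delta> \<longrightarrow> \<bar>F y\<bar> < (e::real)"
proof -
  obtain \<delta> where "\<delta> > 0" "\<forall>y. dist y u < \<delta> \<longrightarrow> dist (F y) (F u) < e"
    using assms(1,3) unfolding continuous_at_eps_delta by blast
  then show ?thesis using assms(2) by (auto simp: dist_norm)
qed
lemma B: assumes "norm (d::real^'n) < \<delta>" "0 < t" "t < 1" shows "norm ((u + t *\<^sub>R d) - u) < \<delta>"
proof -
  have "t * norm d \<le> norm d" using assms by (simp add: mult_left_le_one_le)
  then show ?thesis using assms by simp
qed
lemma C: assumes "\<bar>g1 - g0\<bar> \<le> nd * e" "p1 = p0 + g1" shows "\<bar>p1 - p0 - g0\<bar> \<le> e * (nd::real)"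
  using assms by (simp add: algebra_simps)
lemma D: assumes "\<bar>g1 - g0\<bar> \<le> nd^2 * (2*e)" "p1 = p0 + g0' + g1/2" shows "\<bar>p1 - p0 - g0' - g0/2\<bar> \<le> e * (nd::real)^2"
proof -
  have "p1 - p0 - g0' - g0/2 = (g1 - g0)/2" using assms(2) by simp
  then have "\<bar>p1 - p0 - g0' - g0/2\<bar> = \<bar>g1 - g0\<bar>/2" by (simp only: abs_divide)
  then show ?thesis using assms(1) by (simp add: field_simps)
qed

lemma taylor2_bound:
  assumes "p \<in> polyfun" "e > 0"
  shows "\<exists>\<delta>>0. \<forall>d. norm d < \<delta> \<longrightarrow> \<bar>p (u + d) - p u - g1fun p d u - g2fun p d u / 2\<bar> \<le> e * (norm d)^2"
proof -
  define h where "h i j = partial j (partial i p)" for i j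
  have hp: "h i j \<in> polyfun" for i j unfolding h_def using assms by (intro polyfun_partial(1))
  define F where "F y = (\<Sum>i\<in>UNIV. \<Sum>j\<in>UNIV. \<bar>h i j y - h i j u\<bar>)" for y
  have "isCont F u" unfolding F_def
    by (intro continuous_intros polyfun_isCont hp)
  moreover have "F u = 0" by (simp add: F_def)
  ultimately obtain \<delta> where \<delta>: "\<delta> > 0" "\<And>y. norm (y - u) < \<delta> \<Longrightarrow> \<bar>F y\<bar> < 2 * e"
    using cont_small[where F=F and u=u and e="2*e"] assms(2) by auto
  have "\<bar>p (u + d) - p u - g1fun p d u - g2fun p d u / 2\<bar> \<le> e * (norm d)^2" if "norm d < \<delta>" for d
  proof -
    obtain t where t: "0 < t" "t < 1" "p (u + d) = p u + g1fun p d u + g2fun p d (u + t *\<^sub>R d) / 2"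
      using line_taylor2[OF assms(1)] by blast
    have nt: "norm ((u + t *\<^sub>R d) - u) < \<delta>" using B[OF that t(1,2)] .
    have "\<bar>g2fun p d (u + t *\<^sub>R d) - g2fun p d u\<bar> =
       \<bar>\<Sum>i\<in>UNIV. \<Sum>j\<in>UNIV. d$i * d$j * (h i j (u + t *\<^sub>R d) - h i j u)\<bar>"
      unfolding g2fun_def h_def
      by (simp add: sum_subtractf[symmetric] right_diff_distrib sum_distrib_left mult.assoc)
    also have "\<dots> \<le> (\<Sum>i\<in>UNIV. \<Sum>j\<in>UNIV. \<bar>d$i * d$j * (h i j (u + t *\<^sub>R d) - h i j u)\<bar>)"
      by (rule order_trans[OF sum_abs]) (intro sum_mono sum_abs)
    also have "\<dots> \<le> (\<Sum>i\<in>UNIV. \<Sum>j\<in>UNIV. norm d * norm d * \<bar>h i j (u + t *\<^sub>R d) - h i j u\<bar>)"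
      by (intro sum_mono abs_comp2)
    also have "\<dots> = norm d ^ 2 * F (u + t *\<^sub>R d)"
      by (simp add: F_def sum_distrib_left power2_eq_square)
    also have "\<dots> \<le> norm d ^ 2 * (2 * e)"
      using \<delta>(2)[OF nt] by (intro mult_left_mono) auto
    finally show ?thesis using D[OF _ t(3)] by blast
  qed
  then show ?thesis using \<delta>(1) by blast
qed

lemma taylor1_bound:
  assumes "p \<in> polyfun" "e > 0"
  shows "\<exists>\<delta>>0. \<forall>d. norm d < \<delta> \<longrightarrow> \<bar>p (u + d) - p u - g1fun p d u\<bar> \<le> e * norm d"
proof -
  define h where "h i = partial i p" for i
  have hp: "h i \<in> polyfun" for i unfolding h_def using assms by (intro polyfun_partial(1))
  define F where "F y = (\<Sum>i\<in>UNIV. \<bar>h i y - h i u\<bar>)" for y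
  have "isCont F u" unfolding F_def
    by (intro continuous_intros polyfun_isCont hp)
  moreover have "F u = 0" by (simp add: F_def)
  ultimately obtain \<delta> where \<delta>: "\<delta> > 0" "\<And>y. norm (y - u) < \<delta> \<Longrightarrow> \<bar>F y\<bar> < e"
    using cont_small[where F=F and u=u and e=e] assms(2) by auto
  have "\<bar>p (u + d) - p u - g1fun p d u\<bar> \<le> e * norm d" if "norm d < \<delta>" for d
  proof -
    obtain t where t: "0 < t" "t < 1" "p (u + d) = p u + g1fun p d (u + t *\<^sub>R d)"
      using line_taylor1[OF assms(1)] by blast
    have nt: "norm ((u + t *\<^sub>R d) - u) < \<delta>" using B[OF that t(1,2)] .
    have "\<bar>g1fun p d (u + t *\<^sub>R d) - g1fun p d u\<bar> =
       \<bar>\<Sum>i\<in>UNIV. d$i * (h i (u + t *\<^sub>R d) - h i u)\<bar>"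
      unfolding g1fun_def h_def
      by (simp add: sum_subtractf[symmetric] right_diff_distrib)
    also have "\<dots> \<le> (\<Sum>i\<in>UNIV. \<bar>d$i * (h i (u + t *\<^sub>R d) - h i u)\<bar>)"
      by (rule sum_abs)
    also have "\<dots> \<le> (\<Sum>i\<in>UNIV. norm d * \<bar>h i (u + t *\<^sub>R d) - h i u\<bar>)"
      by (intro sum_mono abs_comp1)
    also have "\<dots> = norm d * F (u + t *\<^sub>R d)"
      by (simp add: F_def sum_distrib_left)
    also have "\<dots> \<le> norm d * e"
      using \<delta>(2)[OF nt] by (intro mult_left_mono) auto
    finally show ?thesis using C[OF _ t(3)] by blast
  qed
  then show ?thesis using \<delta>(1) by blast
qed

lemma inner_transpose: "x \<bullet> (A *v y) = (transpose A *v x) \<bullet> (y::real^'n)"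
  by (metis dot_lmul_matrix transpose_matrix_vector transpose_transpose)

lemma sym_inner: "sym_mat A \<Longrightarrow> x \<bullet> (A *v y) = (A *v x) \<bullet> (y::real^'n)"
  by (simp add: inner_transpose sym_mat_def)

lemma psd_zero:
  assumes "psd A" "v \<bullet> (A *v v) = 0"
  shows "A *v v = 0"
proof -
  have S: "sym_mat A" and P: "\<And>w. w \<bullet> (A *v w) \<ge> 0" using assms(1) by (auto simp: psd_def)
  let ?w = "A *v v"
  have "(v - t *\<^sub>R ?w) \<bullet> (A *v (v - t *\<^sub>R ?w)) = v \<bullet> (A *v v) - 2 * t * (?w \<bullet> ?w) + t^2 * (?w \<bullet> (A *v ?w))" for t
  proof -
    have "v \<bullet> (A *v ?w) = ?w \<bullet> ?w" using sym_inner[OF S, of v ?w] by simp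
    then show ?thesis
      by (simp add: algebra_simps inner_diff_left inner_diff_right power2_eq_square inner_commute)
  qed
  then have ineq: "0 \<le> - 2 * t * (?w \<bullet> ?w) + t^2 * (?w \<bullet> (A *v ?w))" for t
    using P[of "v - t *\<^sub>R ?w"] assms(2) by simp
  show ?thesis
  proof (rule ccontr)
    assume "?w \<noteq> 0"
    then have wp: "?w \<bullet> ?w > 0" by simp
    define c where "c = ?w \<bullet> (A *v ?w)"
    have c0: "c \<ge> 0" using P c_def by simp
    define t where "t = (?w \<bullet> ?w) / (c + 1)"
    have tp: "t > 0" using wp c0 by (simp add: t_def)
    have "t * c < 2 * (?w \<bullet> ?w)"
    proof -
      have "t * c \<le> t * (c + 1)" using tp by simp
      also have "\<dots> = ?w \<bullet> ?w" using c0 by (simp add: t_def)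
      finally show ?thesis using wp by linarith
    qed
    then have "t * (t * c) < t * (2 * (?w \<bullet> ?w))" using tp by simp
    then show False using ineq[of t] by (simp add: c_def power2_eq_square algebra_simps)
  qed
qed

definition outer :: "real^'m \<Rightarrow> real^'m^'m" where
  "outer a = (\<chi> k l. a$k * a$l)"

lemma outer_mult: "outer a *v v = (a \<bullet> v) *\<^sub>R a"
  by (simp add: outer_def matrix_vector_mult_def vec_eq_iff inner_vec_def sum_distrib_left sum_distrib_right algebra_simps)

lemma psd_diag: "psd A \<Longrightarrow> A$i$i \<ge> 0"
proof -
  assume "psd A"
  then have "axis i 1 \<bullet> (A *v axis i 1) \<ge> 0" by (simp add: psd_def)
  moreover have "axis i 1 \<bullet> (A *v axis i 1) = A$i$i"
    by (simp add: matrix_vector_mult_basis column_def inner_axis')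
  ultimately show ?thesis by simp
qed

lemma psd_row_zero:
  assumes "psd A" "A$i$i = 0"
  shows "A$i$l = 0"
proof -
  have "axis i 1 \<bullet> (A *v axis i 1) = A$i$i"
    by (simp add: matrix_vector_mult_basis column_def inner_axis')
  then have "A *v axis i 1 = 0"
    using psd_zero[OF assms(1)] assms(2) by simp
  then have "A$l$i = 0"
    using matrix_vector_mult_basis[of A i] by (auto simp: column_def vec_eq_iff)
  then show ?thesis using assms(1) by (auto simp: psd_def sym_mat_def transpose_def vec_eq_iff)
qed


lemma scaleR_mat_vec: "(c *\<^sub>R M) *v v = c *\<^sub>R (M *v (v::real^'n))"
  by (simp add: matrix_vector_mult_def vec_eq_iff sum_distrib_left mult.assoc)

lemma outer_scale: "outer (c *\<^sub>R a) = (c*c) *\<^sub>R outer a"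
  by (simp add: outer_def vec_eq_iff)

lemma psd_decomp_aux:
  assumes "finite I"
  shows "\<forall>A::real^'m^'m. psd A \<and> (\<forall>k l. (k \<notin> I \<or> l \<notin> I) \<longrightarrow> A$k$l = 0) \<longrightarrow> (\<exists>(N::nat) R. A = (\<Sum>t<N. outer (R t)))"
  using assms
proof (induction I rule: finite_induct)
  case empty
  show ?case
  proof (intro allI impI)
    fix A :: "real^'m^'m" assume "psd A \<and> (\<forall>k l. (k \<notin> {} \<or> l \<notin> {}) \<longrightarrow> A$k$l = 0)"
    then have "A = 0" by (simp add: vec_eq_iff)
    then show "\<exists>(N::nat) R. A = (\<Sum>t<N. outer (R t))" by (intro exI[where x="0::nat"]) simp
  qed
next
  case (insert i I)
  show ?case
  proof (intro allI impI)
    fix A :: "real^'m^'m" assume H: "psd A \<and> (\<forall>k l. (k \<notin> insert i I \<or> l \<notin> insert i I) \<longrightarrow> A$k$l = 0)"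
    have P: "psd A" and Z: "\<And>k l. k \<notin> insert i I \<or> l \<notin> insert i I \<Longrightarrow> A$k$l = 0" using H by auto
    have S: "A$k$l = A$l$k" for k l using P by (auto simp: psd_def sym_mat_def transpose_def vec_eq_iff)
    show "\<exists>(N::nat) R. A = (\<Sum>t<N. outer (R t))"
    proof (cases "A$i$i = 0")
      case True
      have r: "A$i$l = 0" for l using psd_row_zero[OF P True] .
      have "\<forall>k l. (k \<notin> I \<or> l \<notin> I) \<longrightarrow> A$k$l = 0"
        using r S Z by (metis insert_iff)
      then show ?thesis using insert.IH P by blast
    next
      case False
      define c where "c = A$i$i"
      have cp: "c > 0" using psd_diag[OF P, of i] False by (simp add: c_def)
      define a where "a = (\<chi> k. A$k$i)"
      define A' where "A' = A - (1/c) *\<^sub>R outer a"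
      have Aa: "A *v axis i 1 = a" by (simp add: matrix_vector_mult_basis column_def a_def)
      have ai: "a$i = c" by (simp add: a_def c_def)
      have symA: "sym_mat A" using P by (simp add: psd_def)
      have "sym_mat A'" using S
        by (auto simp: sym_mat_def A'_def transpose_def vec_eq_iff outer_def a_def mult.commute)
      moreover have "v \<bullet> (A' *v v) \<ge> 0" for v
      proof -
        define s where "s = (a \<bullet> v) / c"
        define w where "w = v - s *\<^sub>R axis i 1"
        have e1: "axis i 1 \<bullet> (A *v v) = a \<bullet> v" using sym_inner[OF symA, of "axis i 1" v] Aa by simp
        have e2: "v \<bullet> (A *v axis i 1) = a \<bullet> v" using Aa by (simp add: inner_commute)
        have e3: "axis i 1 \<bullet> (A *v axis i 1) = c" using Aa ai by (simp add: inner_axis')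
        have "w \<bullet> (A *v w) = v \<bullet> (A *v v) - 2 * s * (a \<bullet> v) + s * s * c"
          unfolding w_def using e1 e2 e3
          by (simp add: algebra_simps inner_diff_left inner_diff_right)
        also have "\<dots> = v \<bullet> (A *v v) - (a \<bullet> v) * (a \<bullet> v) / c"
          using cp by (simp add: s_def field_simps)
        also have "\<dots> = v \<bullet> (A' *v v)"
          by (simp add: A'_def algebra_simps outer_mult inner_commute scaleR_mat_vec)
        finally show ?thesis using P by (metis psd_def)
      qed
      ultimately have PA': "psd A'" by (simp add: psd_def)
      have "A'$k$l = 0" if "k \<notin> I \<or> l \<notin> I" for k l
      proof -
        have "A'$k$l = A$k$l - (1/c) * (A$k$i * A$l$i)" by (simp add: A'_def outer_def a_def)
        then show ?thesis using that Z S cp insert.hyps(2) unfolding c_def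
          by (cases "k = i"; cases "l = i") (auto simp: field_simps)
      qed
      then obtain N :: nat and R where NR: "A' = (\<Sum>t<N. outer (R t))" using insert.IH PA' by blast
      define b where "b = (1 / sqrt c) *\<^sub>R a"
      have ob: "outer b = (1/c) *\<^sub>R outer a" using cp
        by (simp add: b_def outer_scale real_sqrt_mult[symmetric])
      have "A = A' + outer b" by (simp add: A'_def ob)
      also have "\<dots> = (\<Sum>t<Suc N. outer ((R(N := b)) t))"
        by (simp add: NR)
      finally show ?thesis by blast
    qed
  qed
qed

lemma psd_decomp:
  assumes "psd (A::real^'m^'m)"
  obtains N :: nat and R where "A = (\<Sum>t<N. outer (R t))"
proof -
  have "finite (UNIV::'m set)" by simp
  from psd_decomp_aux[OF this] assms show thesis using that by blast
qed

lemma mp_unique: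
  fixes A X Y :: "real^'m^'m"
  assumes "A ** X ** A = A" "X ** A ** X = X" "transpose (A ** X) = A ** X" "transpose (X ** A) = X ** A"
      and "A ** Y ** A = A" "Y ** A ** Y = Y" "transpose (A ** Y) = A ** Y" "transpose (Y ** A) = Y ** A"
  shows "X = Y"
proof -
  have AX: "A ** X = A ** Y"
  proof -
    have "A ** X = transpose X ** transpose A" using assms(3) by (metis matrix_transpose_mul)
    also have "\<dots> = transpose X ** transpose (A ** Y ** A)" using assms(5) by simp
    also have "\<dots> = transpose X ** (transpose A ** transpose Y ** transpose A)"
      by (simp add: matrix_transpose_mul matrix_mul_assoc)
    also have "\<dots> = (transpose X ** transpose A) ** (transpose Y ** transpose A)"
      by (simp add: matrix_mul_assoc)
    also have "\<dots> = transpose (A ** X) ** transpose (A ** Y)" by (simp add: matrix_transpose_mul)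
    also have "\<dots> = (A ** X) ** (A ** Y)" using assms(3,7) by simp
    also have "\<dots> = (A ** X ** A) ** Y" by (simp add: matrix_mul_assoc)
    also have "\<dots> = A ** Y" using assms(1) by simp
    finally show ?thesis .
  qed
  have XA: "X ** A = Y ** A"
  proof -
    have "X ** A = transpose A ** transpose X" using assms(4) by (metis matrix_transpose_mul)
    also have "\<dots> = transpose (A ** Y ** A) ** transpose X" using assms(5) by simp
    also have "\<dots> = (transpose A ** transpose Y ** transpose A) ** transpose X"
      by (simp add: matrix_transpose_mul matrix_mul_assoc)
    also have "\<dots> = (transpose A ** transpose Y) ** (transpose A ** transpose X)"
      by (simp add: matrix_mul_assoc)
    also have "\<dots> = transpose (Y ** A) ** transpose (X ** A)" by (simp add: matrix_transpose_mul)
    also have "\<dots> = (Y ** A) ** (X ** A)" using assms(4,8) by simp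
    also have "\<dots> = Y ** (A ** X ** A)" by (simp add: matrix_mul_assoc)
    also have "\<dots> = Y ** A" using assms(1) by simp
    finally show ?thesis .
  qed
  have "X = X ** (A ** X)" using assms(2) by (simp add: matrix_mul_assoc)
  also have "\<dots> = (X ** A) ** Y" using AX by (simp add: matrix_mul_assoc)
  also have "\<dots> = Y ** A ** Y" using XA by simp
  also have "\<dots> = Y" using assms(6) .
  finally show ?thesis .
qed

definition proj :: "(real^'m) set \<Rightarrow> real^'m \<Rightarrow> real^'m" where
  "proj S y = (SOME p. p \<in> span S \<and> (\<forall>w\<in>span S. (y - p) \<bullet> w = 0))"

lemma proj:
  shows "proj S y \<in> span S" "w \<in> span S \<Longrightarrow> (y - proj S y) \<bullet> w = 0"
proof -
  obtain p z where "p \<in> span S" "\<And>w. w \<in> span S \<Longrightarrow> orthogonal z w" "y = p + z"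
    using orthogonal_subspace_decomp_exists[of S y] by blast
  then have "\<exists>p. p \<in> span S \<and> (\<forall>w\<in>span S. (y - p) \<bullet> w = 0)"
    by (intro exI[of _ p]) (auto simp: orthogonal_def)
  then have "proj S y \<in> span S \<and> (\<forall>w\<in>span S. (y - proj S y) \<bullet> w = 0)"
    unfolding proj_def by (rule someI_ex)
  then show "proj S y \<in> span S" "w \<in> span S \<Longrightarrow> (y - proj S y) \<bullet> w = 0" by auto
qed

lemma proj_unique:
  assumes "p \<in> span S" "\<And>w. w \<in> span S \<Longrightarrow> (y - p) \<bullet> w = 0"
  shows "proj S y = p"
proof -
  have d: "proj S y - p \<in> span S" by (intro span_diff proj(1) assms(1))
  have "(y - p) \<bullet> (proj S y - p) = 0" using assms(2) d by simp
  moreover have "(y - proj S y) \<bullet> (proj S y - p) = 0" by (rule proj(2)[OF d])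
  ultimately have "(proj S y - p) \<bullet> (proj S y - p) = 0"
    by (simp add: algebra_simps inner_diff_left inner_diff_right)
  then show ?thesis by simp
qed

lemma proj_add: "proj S (x + y) = proj S x + proj S y"
proof (rule proj_unique)
  show "proj S x + proj S y \<in> span S" by (intro span_add proj(1))
  fix w assume w: "w \<in> span S"
  have "x + y - (proj S x + proj S y) = (x - proj S x) + (y - proj S y)" by simp
  then show "(x + y - (proj S x + proj S y)) \<bullet> w = 0"
    using proj(2)[OF w, of x] proj(2)[OF w, of y] by (simp only: inner_add_left)
qed

lemma proj_scale: "proj S (c *\<^sub>R x) = c *\<^sub>R proj S x"
proof (rule proj_unique)
  show "c *\<^sub>R proj S x \<in> span S" by (intro span_mul proj(1))
  fix w assume w: "w \<in> span S"
  have "c *\<^sub>R x - c *\<^sub>R proj S x = c *\<^sub>R (x - proj S x)" by (simp add: algebra_simps)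
  then show "(c *\<^sub>R x - c *\<^sub>R proj S x) \<bullet> w = 0"
    using proj(2)[OF w, of x] by simp
qed

lemma proj_linear: "linear (proj S)"
  by (rule linearI) (simp_all add: proj_add proj_scale)

lemma proj_sym: "x \<bullet> proj S y = proj S x \<bullet> y"
proof -
  have "(x - proj S x) \<bullet> proj S y = 0" by (rule proj(2)[OF proj(1)])
  moreover have "(y - proj S y) \<bullet> proj S x = 0" by (rule proj(2)[OF proj(1)])
  ultimately show ?thesis by (simp add: inner_diff_left inner_diff_right inner_commute)
qed

lemma proj_id: "y \<in> span S \<Longrightarrow> proj S y = y"
  by (rule proj_unique) auto


lemma span_range_mat: "span (range ((*v) (A::real^'m^'m))) = range ((*v) A)"
  by (simp add: linear_subspace_image matrix_vector_mul_linear)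

lemma transpose_eqI:
  fixes M :: "real^'m^'m"
  assumes "\<And>x y. x \<bullet> (M *v y) = (M *v x) \<bullet> y"
  shows "transpose M = M"
proof -
  have "transpose M *v x = M *v x" for x
  proof -
    have "(transpose M *v x - M *v x) \<bullet> y = 0" for y
      using assms[of x y] inner_transpose[of x M y] by (simp add: inner_diff_left)
    from this[of "transpose M *v x - M *v x"] show ?thesis by simp
  qed
  then show ?thesis by (simp add: matrix_eq)
qed

lemma sym_mp_exists:
  fixes A :: "real^'m^'m"
  assumes symA: "sym_mat A"
  shows "\<exists>X. A ** X ** A = A \<and> X ** A ** X = X \<and> transpose (A ** X) = A ** X \<and>
             transpose (X ** A) = X ** A \<and> transpose X = X"
proof -
  define S where "S = range ((*v) A)"
  have spS: "span S = S" unfolding S_def by (rule span_range_mat)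
  have kerorth: "A *v z = 0 \<Longrightarrow> s \<in> S \<Longrightarrow> z \<bullet> s = 0" for z s
    using sym_inner[OF symA, of z] by (auto simp: S_def)
  have projker: "A *v (x - proj S x) = 0" for x
  proof -
    have "(A *v (x - proj S x)) \<bullet> w = 0" for w
    proof -
      have "A *v w \<in> span S" unfolding spS by (simp add: S_def)
      then have "(x - proj S x) \<bullet> (A *v w) = 0" by (rule proj(2))
      then show ?thesis using sym_inner[OF symA] by metis
    qed
    from this[of "A *v (x - proj S x)"] show ?thesis by simp
  qed
  have Apx: "A *v proj S x = A *v x" for x
    using projker[of x] by (simp add: matrix_vector_mult_diff_distrib)
  define B where "B y = proj S (SOME x. A *v x = proj S y)" for y
  have pS: "proj S y \<in> S" for y using proj(1)[of S y] unfolding spS .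
  have exx: "\<exists>x. A *v x = proj S y" for y using pS[of y] by (auto simp: S_def)
  have B1: "B y \<in> S" for y using pS by (simp add: B_def)
  have B2: "A *v B y = proj S y" for y
    unfolding B_def Apx using someI_ex[OF exx[of y]] .
  have Buniq: "s \<in> S \<Longrightarrow> s' \<in> S \<Longrightarrow> A *v s = A *v s' \<Longrightarrow> s = s'" for s s'
  proof -
    assume s: "s \<in> S" "s' \<in> S" "A *v s = A *v s'"
    have "s - s' \<in> S" using s spS span_diff by metis
    moreover have "A *v (s - s') = 0" using s by (simp add: matrix_vector_mult_diff_distrib)
    ultimately have "(s - s') \<bullet> (s - s') = 0" using kerorth by blast
    then show "s = s'" by simp
  qed
  have Sadd: "a \<in> S \<Longrightarrow> b \<in> S \<Longrightarrow> a + b \<in> S" for a b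
    using span_add[of a S b] unfolding spS .
  have Smul: "a \<in> S \<Longrightarrow> c *\<^sub>R a \<in> S" for a c
    using span_mul[of a S c] unfolding spS .
  have Bchar: "s \<in> S \<Longrightarrow> A *v s = proj S y \<Longrightarrow> B y = s" for s y
    using Buniq[OF B1 _] B2 by metis
  have linB: "linear B"
  proof (rule linearI)
    fix x y show "B (x + y) = B x + B y"
      by (rule Bchar) (auto simp: B1 B2 proj_add matrix_vector_right_distrib Sadd)
  next
    fix c x show "B (c *\<^sub>R x) = c *\<^sub>R B x"
      by (rule Bchar) (auto simp: B1 B2 proj_scale matrix_vector_mult_scaleR Smul)
  qed
  define X where "X = matrix B"
  have X: "X *v y = B y" for y unfolding X_def using matrix_works[OF linB[folded linear_matrix_vector_mul_eq]] .
  have projS: "y \<in> S \<Longrightarrow> proj S y = y" for y using proj_id spS by metis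
  have BA: "B (A *v x) = proj S x" for x
  proof (rule Bchar)
    show "proj S x \<in> S" by (rule pS)
    have "A *v x \<in> S" by (simp add: S_def)
    then show "A *v proj S x = proj S (A *v x)" by (simp add: Apx projS)
  qed
  have AB: "A *v B y = proj S y" for y by (rule B2)
  have Bsym: "x \<bullet> B y = B x \<bullet> y" for x y
  proof -
    have "x \<bullet> B y = proj S x \<bullet> B y"
      using proj(2)[of "B y" S x] B1 spS by (simp add: inner_diff_left)
    also have "\<dots> = (A *v B x) \<bullet> B y" by (simp add: AB)
    also have "\<dots> = B x \<bullet> (A *v B y)" using sym_inner[OF symA] by metis
    also have "\<dots> = B x \<bullet> proj S y" by (simp add: AB)
    also have "\<dots> = B x \<bullet> y"
      using proj(2)[of "B x" S y] B1 spS by (simp add: inner_diff_left inner_diff_right inner_commute)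
    finally show ?thesis .
  qed
  have "A ** X ** A = A"
    by (simp add: matrix_eq matrix_vector_mul_assoc[symmetric] X BA AB Apx)
  moreover have "X ** A ** X = X"
  proof -
    have "B (A *v B y) = B y" for y
    proof -
      have "A *v B y \<in> S" by (simp add: S_def)
      then show ?thesis using Bchar[OF B1, of y "A *v B y"] projS by metis
    qed
    then show ?thesis by (simp add: matrix_eq matrix_vector_mul_assoc[symmetric] X)
  qed
  moreover have "transpose (A ** X) = A ** X"
    by (rule transpose_eqI) (simp add: matrix_vector_mul_assoc[symmetric] X AB proj_sym)
  moreover have "transpose (X ** A) = X ** A"
    by (rule transpose_eqI) (simp add: matrix_vector_mul_assoc[symmetric] X BA proj_sym)
  moreover have "transpose X = X"
    by (rule transpose_eqI) (simp add: X Bsym)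
  ultimately show ?thesis by blast
qed

lemma mp_inv_sym:
  fixes A :: "real^'m^'m"
  assumes "sym_mat A"
  shows "A ** mp_inv A ** A = A" "mp_inv A ** A ** mp_inv A = mp_inv A"
    "transpose (A ** mp_inv A) = A ** mp_inv A" "transpose (mp_inv A ** A) = mp_inv A ** A"
    "transpose (mp_inv A) = mp_inv A"
proof -
  obtain X where X: "A ** X ** A = A" "X ** A ** X = X" "transpose (A ** X) = A ** X"
             "transpose (X ** A) = X ** A" "transpose X = X"
    using sym_mp_exists[OF assms] by blast
  have "mp_inv A = X" unfolding mp_inv_def
    by (rule the_equality) (use X mp_unique in blast)+
  then show "A ** mp_inv A ** A = A" "mp_inv A ** A ** mp_inv A = mp_inv A"
    "transpose (A ** mp_inv A) = A ** mp_inv A" "transpose (mp_inv A ** A) = mp_inv A ** A"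
    "transpose (mp_inv A) = mp_inv A" using X by auto
qed

lemma ker_eq_range:
  fixes G0 L :: "real^'m^'m"
  assumes sG: "sym_mat G0" and GL: "G0 ** L = 0" and rk: "rank G0 + rank L = CARD('m)"
  shows "{z. G0 *v z = 0} = range ((*v) L)"
proof -
  define K where "K = {z. G0 *v z = 0}"
  have KO: "K = {y \<in> UNIV. \<forall>x \<in> range ((*v) G0). orthogonal x y}"
  proof -
    have "G0 *v y = 0 \<longleftrightarrow> (\<forall>x. orthogonal (G0 *v x) y)" for y
    proof
      assume "G0 *v y = 0" then show "\<forall>x. orthogonal (G0 *v x) y"
        using sym_inner[OF sG] by (metis inner_zero_right orthogonal_def)
    next
      assume "\<forall>x. orthogonal (G0 *v x) y"
      then have "(G0 *v y) \<bullet> (G0 *v y) = 0" using sym_inner[OF sG]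
        by (metis orthogonal_def)
      then show "G0 *v y = 0" by simp
    qed
    then show ?thesis by (auto simp: K_def)
  qed
  have sub1: "subspace (range ((*v) G0))" by (simp add: linear_subspace_image matrix_vector_mul_linear)
  have "dim K + dim (range ((*v) G0)) = dim (UNIV::(real^'m) set)"
    unfolding KO by (rule dim_subspace_orthogonal_to_vectors[OF sub1 subspace_UNIV]) simp
  then have dK: "dim K + rank G0 = CARD('m)" by (simp add: rank_dim_range)
  have subR: "subspace (range ((*v) L))" by (simp add: linear_subspace_image matrix_vector_mul_linear)
  have subK: "subspace K" unfolding K_def
    by (rule linear_subspace_kernel) (rule matrix_vector_mul_linear)
  have RK: "range ((*v) L) \<subseteq> K"
    by (auto simp: K_def matrix_vector_mul_assoc GL)
  have "dim (range ((*v) L)) = rank L" by (simp add: rank_dim_range)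
  then have "range ((*v) L) = K" using subspace_dim_equal[OF subR subK RK] dK rk by simp
  then show ?thesis by (simp add: K_def)
qed

lemma finsler:
  fixes Aq q :: "real^'n \<Rightarrow> real"
  assumes cA: "continuous_on UNIV Aq" and cq: "continuous_on UNIV q"
    and hA: "\<And>c d. Aq (c *\<^sub>R d) = c^2 * Aq d" and hq: "\<And>c d. q (c *\<^sub>R d) = c^2 * q d"
    and q0: "\<And>d. q d \<ge> 0" and pos: "\<And>d. d \<noteq> 0 \<Longrightarrow> q d = 0 \<Longrightarrow> Aq d > 0"
  shows "\<exists>\<rho> c. c > 0 \<and> \<rho> \<ge> 0 \<and> (\<forall>d. Aq d + \<rho> * q d \<ge> c * (norm d)^2)"
proof -
  define S where "S = sphere (0::real^'n) 1"
  have cS: "compact S" by (simp add: S_def)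
  have neS: "S \<noteq> {}" by (simp add: S_def)
  define g where "g d = q d + max (Aq d) 0" for d
  have cg: "continuous_on S g" unfolding g_def
    by (intro continuous_intros continuous_on_subset[OF cA] continuous_on_subset[OF cq]) auto
  obtain d0 where d0: "d0 \<in> S" "\<And>y. y \<in> S \<Longrightarrow> g d0 \<le> g y"
    using continuous_attains_inf[OF cS neS cg] by blast
  define \<gamma> where "\<gamma> = g d0"
  have gp: "\<gamma> > 0"
  proof -
    have "d0 \<noteq> 0" using d0(1) by (auto simp: S_def)
    then have "q d0 > 0 \<or> Aq d0 > 0" using pos[of d0] q0[of d0] by force
    then show ?thesis using q0[of d0] by (auto simp: \<gamma>_def g_def)
  qed
  obtain d1 where d1: "d1 \<in> S" "\<And>y. y \<in> S \<Longrightarrow> Aq d1 \<le> Aq y"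
    using continuous_attains_inf[OF cS neS continuous_on_subset[OF cA]] by blast
  define M where "M = \<bar>Aq d1\<bar>"
  define \<rho> where "\<rho> = 2 * (M + \<gamma>) / \<gamma>"
  have \<rho>0: "\<rho> \<ge> 0" using gp by (simp add: \<rho>_def M_def)
  have onS: "Aq d + \<rho> * q d \<ge> \<gamma> / 2" if "d \<in> S" for d
  proof (cases "Aq d \<ge> \<gamma> / 2")
    case True then show ?thesis using q0[of d] \<rho>0 by (smt (verit) mult_nonneg_nonneg)
  next
    case False
    have "g d \<ge> \<gamma>" using d0(2)[OF that] by (simp add: \<gamma>_def)
    then have qd: "q d \<ge> \<gamma> / 2" using False gp q0[of d] by (simp add: g_def max_def split: if_splits)
    have "Aq d \<ge> - M" using d1(2)[OF that] by (simp add: M_def)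
    moreover have "\<rho> * q d \<ge> \<rho> * (\<gamma> / 2)" using qd \<rho>0 by (rule mult_left_mono)
    moreover have "\<rho> * (\<gamma> / 2) = M + \<gamma>" using gp by (simp add: \<rho>_def)
    ultimately show ?thesis using gp by linarith
  qed
  have "Aq d + \<rho> * q d \<ge> (\<gamma>/2) * (norm d)^2" for d
  proof (cases "d = 0")
    case True
    have "Aq 0 = 0" using hA[of 0 0] by simp
    moreover have "q 0 = 0" using hq[of 0 0] by simp
    ultimately show ?thesis using True by simp
  next
    case False
    define e where "e = (1 / norm d) *\<^sub>R d"
    have eS: "e \<in> S" using False by (simp add: S_def e_def)
    have de: "d = norm d *\<^sub>R e" using False by (simp add: e_def)
    have "Aq d + \<rho> * q d = (norm d)^2 * (Aq e + \<rho> * q e)"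
      by (subst (1 2) de) (simp add: hA hq algebra_simps)
    also have "\<dots> \<ge> (norm d)^2 * (\<gamma> / 2)" using onS[OF eS] by (intro mult_left_mono) auto
    finally show ?thesis by (simp add: mult.commute)
  qed
  then show ?thesis using gp \<rho>0 by (intro exI[of _ \<rho>] exI[of _ "\<gamma>/2"]) auto
qed

lemma polyfun_sum: "finite I \<Longrightarrow> (\<And>i. i \<in> I \<Longrightarrow> p i \<in> polyfun) \<Longrightarrow> (\<lambda>x. \<Sum>i\<in>I. p i x) \<in> polyfun"
proof (induction I rule: finite_induct)
  case empty then show ?case using polyfun.pconst[of 0] by simp
next
  case (insert j I)
  have "(\<lambda>x. p j x + (\<Sum>i\<in>I. p i x)) \<in> polyfun"
    using insert by (intro polyfun.padd) auto
  then show ?case using insert by simp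
qed

lemma polyfun_cmult: "p \<in> polyfun \<Longrightarrow> (\<lambda>x. c * p x) \<in> polyfun"
  by (intro polyfun.pmult polyfun.pconst)

lemma polyfun_diff: "p \<in> polyfun \<Longrightarrow> q \<in> polyfun \<Longrightarrow> (\<lambda>x. p x - q x) \<in> polyfun"
proof -
  assume p: "p \<in> polyfun" and q: "q \<in> polyfun"
  have "(\<lambda>x. p x + (-1) * q x) \<in> polyfun" by (intro polyfun.padd polyfun_cmult p q)
  then show ?thesis by simp
qed

lemma polyfun_affine: "(\<lambda>x::real^'n. c0 - (\<Sum>i\<in>UNIV. (x$i - u$i) * c i)) \<in> polyfun"
  by (intro polyfun_diff polyfun.pconst polyfun_sum polyfun.pmult polyfun.pvar) auto

lemma frob_expand: "frob A B = (\<Sum>k\<in>UNIV. \<Sum>l\<in>UNIV. A$k$l * B$k$l)"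
  by (simp add: frob_def trace_def matrix_matrix_mult_def transpose_def)

lemma sum_outer_entry: "(\<Sum>t<N. outer (R t))$k$l = (\<Sum>t<(N::nat). R t$k * R t$l)"
  by (simp add: outer_def)

lemma frob_decomp:
  assumes "L = (\<Sum>t<(N::nat). outer (R t))"
  shows "frob L M = (\<Sum>t<N. R t \<bullet> (M *v R t))"
proof -
  have "frob L M = (\<Sum>k\<in>UNIV. \<Sum>l\<in>UNIV. \<Sum>t<N. R t$k * R t$l * M$k$l)"
    by (simp add: frob_expand assms outer_def sum_distrib_right)
  also have "\<dots> = (\<Sum>t<N. \<Sum>k\<in>UNIV. \<Sum>l\<in>UNIV. R t$k * R t$l * M$k$l)"
    by (simp add: sum.swap[of _ "{..<N}"])
  also have "\<dots> = (\<Sum>t<N. R t \<bullet> (M *v R t))"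
    by (simp add: inner_vec_def matrix_vector_mult_def sum_distrib_left mult.commute mult.left_commute)
  finally show ?thesis .
qed

lemma frob_decomp2:
  assumes "L = (\<Sum>t<(N::nat). outer (R t))"
  shows "frob M L = (\<Sum>t<N. R t \<bullet> (M *v R t))"
proof -
  have "frob M L = frob L M" by (simp add: frob_expand mult.commute)
  then show ?thesis using frob_decomp[OF assms] by simp
qed

lemma decomp_mult:
  assumes "L = (\<Sum>t<(N::nat). outer (R t))"
  shows "L *v y = (\<Sum>t<N. (R t \<bullet> y) *\<^sub>R R t)"
proof -
  have "L *v y = (\<Sum>t<N. outer (R t) *v y)"
    by (simp add: assms vec_eq_iff matrix_vector_mult_def sum_distrib_right sum_component)
      (intro allI sum.swap)
  then show ?thesis by (simp add: outer_mult)
qed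

lemma bilin_bound: "\<bar>x \<bullet> (M *v y)\<bar> \<le> (\<Sum>k\<in>UNIV. \<Sum>l\<in>UNIV. \<bar>M$k$l\<bar>) * norm x * norm (y::real^'n)"
proof -
  have "\<bar>x \<bullet> (M *v y)\<bar> = \<bar>\<Sum>k\<in>UNIV. \<Sum>l\<in>UNIV. x$k * M$k$l * y$l\<bar>"
    by (simp add: inner_vec_def matrix_vector_mult_def sum_distrib_left mult.assoc)
  also have "\<dots> \<le> (\<Sum>k\<in>UNIV. \<Sum>l\<in>UNIV. \<bar>x$k * M$k$l * y$l\<bar>)"
    by (rule order_trans[OF sum_abs]) (intro sum_mono sum_abs)
  also have "\<dots> \<le> (\<Sum>k\<in>UNIV. \<Sum>l\<in>UNIV. \<bar>M$k$l\<bar> * (norm x * norm y))"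
  proof (intro sum_mono)
    fix k l
    have xy: "\<bar>x$k\<bar> * \<bar>y$l\<bar> \<le> norm x * norm y"
      by (intro mult_mono component_le_norm_cart) auto
    show "\<bar>x$k * M$k$l * y$l\<bar> \<le> \<bar>M$k$l\<bar> * (norm x * norm y)"
      using mult_right_mono[OF xy, of "\<bar>M$k$l\<bar>"] by (simp add: abs_mult mult_ac)
  qed
  also have "\<dots> = (\<Sum>k\<in>UNIV. \<Sum>l\<in>UNIV. \<bar>M$k$l\<bar>) * norm x * norm y"
    by (simp add: sum_distrib_right mult.assoc)
  finally show ?thesis .
qed

lemma small_sum:
  fixes F :: "'i \<Rightarrow> 'a::real_normed_vector \<Rightarrow> real" and h :: "'a \<Rightarrow> real" and e :: real
  assumes "finite I"
    and "\<And>i e. i \<in> I \<Longrightarrow> e > 0 \<Longrightarrow> \<exists>\<delta>>0. \<forall>d. norm d < \<delta> \<longrightarrow> \<bar>F i d\<bar> \<le> e * h d"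
    and h0: "\<And>d. h d \<ge> 0"
  shows "e > 0 \<Longrightarrow> \<exists>\<delta>>0. \<forall>d::'a::real_normed_vector. norm d < \<delta> \<longrightarrow> (\<Sum>i\<in>I. \<bar>F i d\<bar>) \<le> e * h d"
  using assms(1,2)
proof (induction I arbitrary: e rule: finite_induct)
  case empty
  have "0 \<le> e * h d" for d using mult_nonneg_nonneg[OF less_imp_le[OF empty(1)] h0[of d]] .
  then show ?case by (intro exI[of _ 1]) auto
next
  case (insert j I)
  have e2: "e/2 > 0" using insert by simp
  obtain \<delta>1 where d1: "\<delta>1 > 0" "\<forall>d. norm d < \<delta>1 \<longrightarrow> \<bar>F j d\<bar> \<le> (e/2) * h d"
    using insert.prems(2)[of j "e/2"] e2 by auto
  obtain \<delta>2 where d2: "\<delta>2 > 0" "\<forall>d. norm d < \<delta>2 \<longrightarrow> (\<Sum>i\<in>I. \<bar>F i d\<bar>) \<le> (e/2) * h d"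
    using insert.IH[OF e2] insert.prems(2) by auto
  show ?case
  proof (intro exI[of _ "min \<delta>1 \<delta>2"] conjI allI impI)
    show "min \<delta>1 \<delta>2 > 0" using d1 d2 by simp
    fix d :: 'a assume "norm d < min \<delta>1 \<delta>2"
    then have "\<bar>F j d\<bar> \<le> (e/2) * h d" "(\<Sum>i\<in>I. \<bar>F i d\<bar>) \<le> (e/2) * h d" using d1 d2 by auto
    then show "(\<Sum>i\<in>insert j I. \<bar>F i d\<bar>) \<le> e * h d" using insert.hyps by simp
  qed
qed

lemma g2fun_hess: "g2fun p d u = d \<bullet> (hess p u *v d)"
  by (simp add: g2fun_def hess_def inner_vec_def matrix_vector_mult_def mult.commute mult.left_commute)

lemma partial_at:
  assumes "p \<in> polyfun"
  shows "((\<lambda>t. p (x + t *\<^sub>R axis i 1)) has_real_derivative partial i p x) (at 0)"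
proof -
  have "((\<lambda>t. p (x + t *\<^sub>R axis i 1)) has_real_derivative (\<Sum>j\<in>UNIV. axis i 1$j * partial j p (x + 0 *\<^sub>R axis i 1))) (at 0)"
    by (rule polyfun_partial(2)[OF assms])
  moreover have "(\<Sum>j\<in>UNIV. axis i 1$j * partial j p (x + 0 *\<^sub>R axis i (1::real))) = partial i p x"
  proof -
    have "axis i 1$j * partial j p x = (if j = i then partial i p x else 0)" for j
      by (simp add: axis_def)
    then show ?thesis by simp
  qed
  ultimately show ?thesis by simp
qed

lemma mat_entry: "(transpose E ** M ** E)$a$b = (E *v axis a 1) \<bullet> (M *v (E *v axis b (1::real)))"
proof -
  have "(transpose E ** M ** E)$a$b = axis a 1 \<bullet> ((transpose E ** M ** E) *v axis b 1)"
    by (simp add: matrix_vector_mult_basis column_def inner_axis')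
  also have "\<dots> = axis a 1 \<bullet> (transpose E *v (M *v (E *v axis b 1)))"
    by (simp add: matrix_vector_mul_assoc matrix_mul_assoc)
  also have "\<dots> = (E *v axis a 1) \<bullet> (M *v (E *v axis b (1::real)))"
    by (rule inner_transpose[of _ "transpose E", unfolded transpose_transpose])
  finally show ?thesis .
qed

lemma mat_sum: "(A::real^'m^'k) *v (\<Sum>t\<in>T. f t) = (\<Sum>t\<in>T. A *v f t)"
  using linear_sum[OF matrix_vector_mul_linear[of A], of f T] by (simp add: o_def)

lemma G1_mult: "(\<Sum>i\<in>I. d$i *\<^sub>R M i) *v y = (\<Sum>i\<in>I. d$i *\<^sub>R (M i *v (y::real^'m)))"
proof -
  have "(\<Sum>i\<in>I. d$i *\<^sub>R M i) *v y = (\<Sum>i\<in>I. (d$i *\<^sub>R M i) *v y)"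
    by (simp add: vec_eq_iff matrix_vector_mult_def sum_component sum_distrib_right) (intro allI sum.swap)
  then show ?thesis by (simp add: scaleR_mat_vec)
qed

lemma main_case:
  fixes f :: "real^'n \<Rightarrow> real" and G :: "real^'n \<Rightarrow> real^'m^'m"
    and u :: "real^'n" and \<Lambda> E :: "real^'m^'m"
  assumes fp: "f \<in> polyfun" and Gp: "polymat_sym G"
    and lm: "local_minimizer f G u" and kc: "kernel_cols (G u) E"
    and kkt: "KKT f G u \<Lambda>" and scc: "SCC G u \<Lambda>" and sosc: "SOSC f G u \<Lambda> E"
    and fu: "f u = fmin f G"
  shows "\<exists>U a. open U \<and> u \<in> U \<and> a \<in> QM G \<and>
           {x. a x \<ge> 0} \<inter> {x. f x = fmin f G} \<inter> U \<subseteq> feas G"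
proof -
  have Gkl: "(\<lambda>x. G x$k$l) \<in> polyfun" for k l using Gp by (simp add: polymat_sym_def)
  have symG: "sym_mat (G x)" for x using Gp by (simp add: polymat_sym_def)
  have Gsym_e: "G x$k$l = G x$l$k" for x k l
    using symG[of x] by (auto simp: sym_mat_def transpose_def vec_eq_iff)
  define G0 where "G0 = G u"
  have uf: "u \<in> feas G" using lm by (simp add: local_minimizer_def)
  have psdG0: "psd G0" using uf by (simp add: feas_def G0_def)
  have symG0: "sym_mat G0" using symG by (simp add: G0_def)
  have symL: "sym_mat \<Lambda>" and psdL: "psd \<Lambda>"
    and gradf: "grad f u = (\<chi> i. frob (mpartial i G u) \<Lambda>)" and compl: "frob \<Lambda> G0 = 0"
    using kkt by (auto simp: KKT_def G0_def)
  obtain N :: nat and R where LR: "\<Lambda> = (\<Sum>t<N. outer (R t))" using psd_decomp[OF psdL] by blast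
  have G0R: "G0 *v R t = 0" if "t < N" for t
  proof -
    have nn: "\<And>t. t \<in> {..<N} \<Longrightarrow> R t \<bullet> (G0 *v R t) \<ge> 0" using psdG0 by (simp add: psd_def)
    have "(\<Sum>t<N. R t \<bullet> (G0 *v R t)) = 0" using compl frob_decomp[OF LR] by simp
    then have "R t \<bullet> (G0 *v R t) = 0" using sum_nonneg_eq_0_iff[of "{..<N}", OF _ nn] that by auto
    then show ?thesis by (rule psd_zero[OF psdG0])
  qed
  have G0L: "G0 ** \<Lambda> = 0"
  proof -
    have "(G0 ** \<Lambda>) *v y = 0 *v y" for y
      by (simp add: matrix_vector_mul_assoc[symmetric] decomp_mult[OF LR] mat_sum
          matrix_vector_mult_scaleR G0R)
    then show ?thesis by (simp add: matrix_eq)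
  qed
  have kerR: "{z. G0 *v z = 0} = range ((*v) \<Lambda>)"
    using ker_eq_range[OF symG0 G0L] scc by (simp add: SCC_def G0_def)
  define Gd where "Gd = mp_inv G0"
  note pen = mp_inv_sym[OF symG0, folded Gd_def]
  have Gdsym: "x \<bullet> (Gd *v y) = (Gd *v x) \<bullet> y" for x y
    using sym_inner[of Gd] pen(5) by (simp add: sym_mat_def)
  define Pf where "Pf x = x - Gd *v (G0 *v x)" for x
  have G0Pf: "G0 *v Pf x = 0" for x
  proof -
    have "G0 *v (Gd *v (G0 *v x)) = (G0 ** Gd ** G0) *v x" by (simp add: matrix_vector_mul_assoc matrix_mul_assoc)
    then show ?thesis using pen(1) by (simp add: Pf_def matrix_vector_mult_diff_distrib)
  qed
  have Pfsym: "Pf x \<bullet> y = x \<bullet> Pf y" for x y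
  proof -
    have "(Gd *v (G0 *v x)) \<bullet> y = ((Gd ** G0) *v x) \<bullet> y" by (simp add: matrix_vector_mul_assoc)
    also have "\<dots> = x \<bullet> ((Gd ** G0) *v y)" using inner_transpose[of x "Gd ** G0" y] pen(4) by simp
    also have "\<dots> = x \<bullet> (Gd *v (G0 *v y))" by (simp add: matrix_vector_mul_assoc)
    finally show ?thesis by (simp add: Pf_def inner_diff_left inner_diff_right)
  qed
  have Pfid: "G0 *v z = 0 \<Longrightarrow> Pf z = z" for z by (simp add: Pf_def)
  have PfPf: "Pf (Pf x) = Pf x" for x using Pfid[OF G0Pf] .
  have Pflin: "linear Pf"
    by (rule linearI) (simp_all add: Pf_def matrix_vector_right_distrib matrix_vector_mult_scaleR algebra_simps)
  define Gi where "Gi i = mpartial i G u" for i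
  have Gisym: "sym_mat (Gi i)" for i
  proof -
    have "(\<lambda>y. G y$k$l) = (\<lambda>y. G y$l$k)" for k l using Gsym_e by auto
    then show ?thesis by (auto simp: sym_mat_def transpose_def vec_eq_iff Gi_def mpartial_def)
  qed
  define G1 where "G1 d = (\<Sum>i\<in>UNIV. d$i *\<^sub>R Gi i)" for d
  define s where "s t d = G1 d *v R t" for t d
  have s_exp: "s t d = (\<Sum>i\<in>UNIV. d$i *\<^sub>R (Gi i *v R t))" for t d
    by (simp add: s_def G1_def G1_mult)
  have slin: "linear (s t)" for t
    by (rule linearI) (simp_all add: s_exp scaleR_add_left sum.distrib scaleR_sum_right)
  define Lg where "Lg = Lag f G \<Lambda>"
  define HM where "HM = hess Lg u + Hterm G u \<Lambda>"
  define Aq where "Aq d = d \<bullet> (HM *v d)" for d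
  define q where "q d = (\<Sum>t<N. Pf (s t d) \<bullet> Pf (s t d))" for d
  have Psl: "linear (\<lambda>d. Pf (s t d))" for t
    using linear_compose[OF slin Pflin] by (simp add: o_def)
  have Psbl: "bounded_linear (\<lambda>d. Pf (s t d))" for t
    using Psl linear_conv_bounded_linear by blast
  have cAq: "continuous_on UNIV Aq" unfolding Aq_def
    by (intro continuous_intros linear_continuous_on matrix_vector_mul_bounded_linear)
  have cq: "continuous_on UNIV q" unfolding q_def
    by (intro continuous_intros linear_continuous_on Psbl)
  have hAq: "Aq (c *\<^sub>R d) = c^2 * Aq d" for c d
    by (simp add: Aq_def matrix_vector_mult_scaleR power2_eq_square)
  have hq: "q (c *\<^sub>R d) = c^2 * q d" for c d
  proof -
    have "Pf (s t (c *\<^sub>R d)) = c *\<^sub>R Pf (s t d)" for t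
      using linear_cmul[OF Psl] by simp
    then show ?thesis by (simp add: q_def power2_eq_square sum_distrib_left mult.assoc)
  qed
  have q0: "q d \<ge> 0" for d by (simp add: q_def sum_nonneg)
  have crit: "(\<Sum>i\<in>UNIV. d$i *\<^sub>R (transpose E ** Gi i ** E)) = 0" if qd: "q d = 0" for d
  proof -
    have Ps0: "Pf (s t d) = 0" if "t < N" for t
    proof -
      have "Pf (s t d) \<bullet> Pf (s t d) = 0"
        using sum_nonneg_eq_0_iff[of "{..<N}" "\<lambda>t. Pf (s t d) \<bullet> Pf (s t d)"] qd that
        by (simp add: q_def)
      then show ?thesis by simp
    qed
    have "(\<Sum>i\<in>UNIV. d$i *\<^sub>R (transpose E ** Gi i ** E))$a$b = 0" for a b
    proof -
      define ea where "ea = E *v axis a (1::real)"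
      define eb where "eb = E *v axis b (1::real)"
      have kE: "G0 *v (E *v y) = 0" for y using kc by (auto simp: kernel_cols_def G0_def)
      have "eb \<in> range ((*v) \<Lambda>)" using kerR kE[of "axis b 1"] by (auto simp: eb_def)
      then obtain y where y: "eb = \<Lambda> *v y" by blast
      have "(\<Sum>i\<in>UNIV. d$i *\<^sub>R (transpose E ** Gi i ** E))$a$b =
            (\<Sum>i\<in>UNIV. d$i * (ea \<bullet> (Gi i *v eb)))"
        by (simp add: sum_component mat_entry ea_def eb_def)
      also have "\<dots> = ea \<bullet> (G1 d *v eb)"
        by (simp add: G1_def G1_mult inner_sum_right)
      also have "\<dots> = (\<Sum>t<N. (R t \<bullet> y) * (ea \<bullet> s t d))"
        by (simp add: y decomp_mult[OF LR] mat_sum matrix_vector_mult_scaleR s_def inner_sum_right)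
      also have "\<dots> = 0"
      proof (intro sum.neutral ballI)
        fix t assume "t \<in> {..<N}"
        have "ea \<bullet> s t d = Pf ea \<bullet> s t d" using Pfid[OF kE[of "axis a 1"]] by (simp add: ea_def)
        also have "\<dots> = 0" using Pfsym Ps0 \<open>t \<in> {..<N}\<close> by simp
        finally show "(R t \<bullet> y) * (ea \<bullet> s t d) = 0" by simp
      qed
      finally show ?thesis .
    qed
    then show ?thesis by (simp add: vec_eq_iff)
  qed
  have posA: "Aq d > 0" if "d \<noteq> 0" "q d = 0" for d
    using sosc that crit[OF that(2)] by (simp add: SOSC_def Aq_def HM_def Lg_def Gi_def)
  obtain \<rho>0 c where c: "c > 0" "\<rho>0 \<ge> 0" "\<And>d. Aq d + \<rho>0 * q d \<ge> c * (norm d)^2"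
    using finsler[OF cAq cq hAq hq q0 posA] by blast
  define \<rho> where "\<rho> = \<rho>0 / 4"
  define cc where "cc t i = Gd *v (Gi i *v R t) + \<rho> *\<^sub>R Pf (Gi i *v R t)" for t i
  define z where "z t d = (\<Sum>i\<in>UNIV. d$i *\<^sub>R cc t i)" for t and d :: "real^'n"
  define w where "w t d = R t - z t d" for t d
  define a where "a x = (\<Sum>t<N. w t (x - u) \<bullet> (G x *v w t (x - u)))" for x
  have z_eq: "z t d = Gd *v s t d + \<rho> *\<^sub>R Pf (s t d)" for t d
  proof -
    have "Pf (s t d) = (\<Sum>i\<in>UNIV. d$i *\<^sub>R Pf (Gi i *v R t))"
      unfolding s_exp by (simp add: linear_sum[OF Pflin] linear_cmul[OF Pflin] o_def)
    then show ?thesis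
      by (simp add: z_def cc_def s_exp mat_sum matrix_vector_mult_scaleR scaleR_add_right
          sum.distrib scaleR_sum_right mult.commute)
  qed
  have aQM: "a \<in> QM G"
  proof -
    have sos0: "(\<lambda>x::real^'n. 0) \<in> SOS" unfolding SOS_def
      by (rule CollectI, rule exI[of _ "0::nat"]) simp
    have pv: "(\<lambda>x. w t (x - u) $ k) \<in> polyfun" for t k
    proof -
      have "(\<lambda>x. w t (x - u) $ k) = (\<lambda>x. R t$k - (\<Sum>i\<in>UNIV. (x$i - u$i) * cc t i$k))"
        by (simp add: w_def z_def sum_component)
      then show ?thesis using polyfun_affine by simp
    qed
    show ?thesis unfolding QM_def
      by (rule CollectI, rule exI[of _ "\<lambda>x. 0"], rule exI[of _ N], rule exI[of _ "\<lambda>t x. w t (x - u)"])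
        (simp add: sos0 pv a_def fun_eq_iff)
  qed
  define Cz where "Cz t = (\<Sum>i\<in>UNIV. norm (cc t i))" for t
  have Czb: "norm (z t d) \<le> Cz t * norm d" for t d
  proof -
    have "norm (z t d) \<le> (\<Sum>i\<in>UNIV. norm (d$i *\<^sub>R cc t i))" unfolding z_def by (rule norm_sum)
    also have "\<dots> \<le> (\<Sum>i\<in>UNIV. norm d * norm (cc t i))"
      by (intro sum_mono) (simp add: mult_right_mono component_le_norm_cart)
    finally show ?thesis by (simp add: Cz_def sum_distrib_left mult.commute)
  qed
  have wid: "w t d \<bullet> (G (u + d) *v w t d) = R t \<bullet> (G (u + d) *v R t) - s t d \<bullet> (Gd *v s t d)
      - 2 * \<rho> * (Pf (s t d) \<bullet> Pf (s t d)) - 2 * (z t d \<bullet> ((G (u + d) - G0 - G1 d) *v R t))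
      + z t d \<bullet> ((G (u + d) - G0) *v z t d)" if "t < N" for t d
  proof -
    define r where "r = R t"
    define zz where "zz = z t d"
    define ss where "ss = s t d"
    define Gx where "Gx = G (u + d)"
    have e1: "w t d \<bullet> (Gx *v w t d) = r \<bullet> (Gx *v r) - 2 * (zz \<bullet> (Gx *v r)) + zz \<bullet> (Gx *v zz)"
    proof -
      have "r \<bullet> (Gx *v zz) = zz \<bullet> (Gx *v r)"
        using sym_inner[OF symG[of "u + d"], of r zz] by (simp add: Gx_def inner_commute)
      then show ?thesis
        by (simp add: w_def r_def zz_def matrix_vector_mult_diff_distrib inner_diff_left inner_diff_right)
    qed
    have e2: "Gx *v r = ss + (Gx - G0 - G1 d) *v r"
      using G0R[OF that] by (simp add: matrix_vector_mult_diff_rdistrib ss_def s_def r_def)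
    have e3: "Gx *v zz = G0 *v zz + (Gx - G0) *v zz"
      by (simp add: matrix_vector_mult_diff_rdistrib)
    have e4: "zz \<bullet> ss = ss \<bullet> (Gd *v ss) + \<rho> * (Pf ss \<bullet> Pf ss)"
    proof -
      have "Pf ss \<bullet> Pf ss = Pf ss \<bullet> ss" using Pfsym[of ss "Pf ss"] PfPf by (simp add: inner_commute)
      then show ?thesis by (simp add: zz_def z_eq ss_def inner_add_left inner_add_right inner_commute)
    qed
    have e5: "zz \<bullet> (G0 *v zz) = ss \<bullet> (Gd *v ss)"
    proof -
      have g: "G0 *v zz = G0 *v (Gd *v ss)"
        by (simp add: zz_def z_eq ss_def matrix_vector_right_distrib matrix_vector_mult_scaleR G0Pf)
      have p0: "Pf ss \<bullet> (G0 *v y) = 0" for y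
        using sym_inner[OF symG0, of "Pf ss" y] G0Pf by simp
      have "(Gd *v ss) \<bullet> (G0 *v (Gd *v ss)) = ss \<bullet> (Gd *v (G0 *v (Gd *v ss)))"
        using Gdsym[of ss "G0 *v (Gd *v ss)"] by simp
      also have "\<dots> = ss \<bullet> ((Gd ** G0 ** Gd) *v ss)" by (simp add: matrix_vector_mul_assoc matrix_mul_assoc)
      also have "\<dots> = ss \<bullet> (Gd *v ss)" using pen(2) by simp
      finally have "(Gd *v ss) \<bullet> (G0 *v (Gd *v ss)) = ss \<bullet> (Gd *v ss)" .
      moreover have "zz \<bullet> (G0 *v zz) = (Gd *v ss + \<rho> *\<^sub>R Pf ss) \<bullet> (G0 *v (Gd *v ss))"
        unfolding g by (simp add: zz_def z_eq ss_def)
      ultimately show ?thesis using p0 by (simp add: inner_add_left)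
    qed
    have "w t d \<bullet> (Gx *v w t d) = r \<bullet> (Gx *v r) - 2 * (zz \<bullet> ss) - 2 * (zz \<bullet> ((Gx - G0 - G1 d) *v r))
        + zz \<bullet> (G0 *v zz) + zz \<bullet> ((Gx - G0) *v zz)"
      unfolding e1 by (subst e2, subst e3) (simp add: inner_add_right algebra_simps)
    also have "\<dots> = r \<bullet> (Gx *v r) - ss \<bullet> (Gd *v ss) - 2 * \<rho> * (Pf ss \<bullet> Pf ss)
        - 2 * (zz \<bullet> ((Gx - G0 - G1 d) *v r)) + zz \<bullet> ((Gx - G0) *v zz)"
      unfolding e4 e5 by (simp add: algebra_simps)
    finally show ?thesis by (simp add: r_def zz_def ss_def Gx_def)
  qed
  have aform: "a (u + d) = frob \<Lambda> (G (u + d)) - (\<Sum>t<N. s t d \<bullet> (Gd *v s t d)) - 2 * \<rho> * q d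
     + (\<Sum>t<N. z t d \<bullet> ((G (u + d) - G0) *v z t d) - 2 * (z t d \<bullet> ((G (u + d) - G0 - G1 d) *v R t)))" for d
  proof -
    have "a (u + d) = (\<Sum>t<N. R t \<bullet> (G (u + d) *v R t) - s t d \<bullet> (Gd *v s t d)
      - 2 * \<rho> * (Pf (s t d) \<bullet> Pf (s t d)) - 2 * (z t d \<bullet> ((G (u + d) - G0 - G1 d) *v R t))
      + z t d \<bullet> ((G (u + d) - G0) *v z t d))"
      unfolding a_def by (rule sum.cong) (simp_all add: wid)
    also have "\<dots> = frob \<Lambda> (G (u + d)) - (\<Sum>t<N. s t d \<bullet> (Gd *v s t d)) - 2 * \<rho> * q d
     + (\<Sum>t<N. z t d \<bullet> ((G (u + d) - G0) *v z t d) - 2 * (z t d \<bullet> ((G (u + d) - G0 - G1 d) *v R t)))"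
      by (simp add: frob_decomp[OF LR] q_def sum.distrib sum_subtractf sum_distrib_left)
    finally show ?thesis .
  qed
  have Hq: "d \<bullet> (Hterm G u \<Lambda> *v d) = 2 * (\<Sum>t<N. s t d \<bullet> (Gd *v s t d))" for d
  proof -
    define X where "X t i j = (Gi i *v R t) \<bullet> (Gd *v (Gi j *v R t))" for t i j
    have X_alt: "X t i j = (Gi j *v R t) \<bullet> (Gd *v (Gi i *v R t))" for t i j
      using Gdsym[of "Gi i *v R t" "Gi j *v R t"] by (simp add: X_def inner_commute)
    have Hij: "Hterm G u \<Lambda> $i$j = 2 * (\<Sum>t<N. X t i j)" for i j
    proof -
      have "R t \<bullet> ((Gi i ** Gd ** Gi j) *v R t) = X t i j" for t
        using sym_inner[OF Gisym[of i], of "R t" "Gd *v (Gi j *v R t)"]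
        by (simp add: X_def matrix_vector_mul_assoc[symmetric])
      then show ?thesis by (simp add: Hterm_def frob_decomp[OF LR] Gi_def[symmetric] Gd_def G0_def)
    qed
    have "d \<bullet> (Hterm G u \<Lambda> *v d) = (\<Sum>i\<in>UNIV. \<Sum>j\<in>UNIV. d$i * d$j * Hterm G u \<Lambda> $i$j)"
      by (simp add: inner_vec_def matrix_vector_mult_def sum_distrib_left mult_ac)
    also have "\<dots> = (\<Sum>i\<in>UNIV. \<Sum>j\<in>UNIV. \<Sum>t<N. 2 * (d$i * d$j * X t i j))"
      by (simp add: Hij sum_distrib_left mult_ac)
    also have "\<dots> = (\<Sum>i\<in>UNIV. \<Sum>t<N. \<Sum>j\<in>UNIV. 2 * (d$i * d$j * X t i j))"
      by (rule sum.cong[OF refl], rule sum.swap)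
    also have "\<dots> = (\<Sum>t<N. \<Sum>i\<in>UNIV. \<Sum>j\<in>UNIV. 2 * (d$i * d$j * X t i j))"
      by (rule sum.swap)
    also have "\<dots> = 2 * (\<Sum>t<N. s t d \<bullet> (Gd *v s t d))"
      by (simp add: s_exp mat_sum matrix_vector_mult_scaleR inner_sum_left inner_sum_right
          sum_distrib_left mult_ac X_alt)
    finally show ?thesis .
  qed
  have Lg_exp: "Lg = (\<lambda>y. f y - (\<Sum>k\<in>UNIV. \<Sum>l\<in>UNIV. \<Lambda>$k$l * G y$k$l))"
    by (simp add: Lg_def Lag_def frob_expand fun_eq_iff)
  have Lgp: "Lg \<in> polyfun" unfolding Lg_exp
    by (intro polyfun_diff fp polyfun_sum polyfun_cmult Gkl) auto
  have Lgu: "Lg u = f u" using compl by (simp add: Lg_def Lag_def G0_def)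
  have dLg: "partial i Lg u = 0" for i
  proof -
    have "((\<lambda>t. Lg (u + t *\<^sub>R axis i 1)) has_real_derivative
           partial i f u - (\<Sum>k\<in>UNIV. \<Sum>l\<in>UNIV. \<Lambda>$k$l * partial i (\<lambda>y. G y$k$l) u)) (at 0)"
      unfolding Lg_exp
      by (intro DERIV_diff DERIV_sum DERIV_cmult partial_at fp Gkl)
    then have "partial i Lg u = partial i f u - (\<Sum>k\<in>UNIV. \<Sum>l\<in>UNIV. \<Lambda>$k$l * partial i (\<lambda>y. G y$k$l) u)"
      unfolding partial_def by (rule DERIV_imp_deriv)
    moreover have "partial i f u = (\<Sum>k\<in>UNIV. \<Sum>l\<in>UNIV. \<Lambda>$k$l * partial i (\<lambda>y. G y$k$l) u)"
    proof -
      have "partial i f u = grad f u $ i" by (simp add: grad_def)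
      also have "\<dots> = frob (mpartial i G u) \<Lambda>" using gradf by simp
      finally show ?thesis by (simp add: frob_expand mpartial_def mult.commute)
    qed
    ultimately show ?thesis by simp
  qed
  have g1z: "g1fun Lg d u = 0" for d by (simp add: g1fun_def dLg)
  have g2e: "g2fun Lg d u = Aq d - 2 * (\<Sum>t<N. s t d \<bullet> (Gd *v s t d))" for d
    by (simp add: g2fun_hess Aq_def HM_def matrix_vector_mult_add_rdistrib inner_add_right Hq)
  have frobGx: "frob \<Lambda> (G x) = f x - Lg x" for x by (simp add: Lg_def Lag_def)
  define M0 where "M0 d = G (u + d) - G0" for d
  define M1 where "M1 d = G (u + d) - G0 - G1 d" for d
  define errs where "errs d = (\<Sum>t<N. z t d \<bullet> (M0 d *v z t d) - 2 * (z t d \<bullet> (M1 d *v R t)))" for d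
  define E1 where "E1 d = Lg (u + d) - Lg u - g1fun Lg d u - g2fun Lg d u / 2" for d
  have aV: "a (u + d) = - (Aq d + \<rho>0 * q d) / 2 - E1 d + errs d" if "f (u + d) = f u" for d
  proof -
    have fr: "frob \<Lambda> (G (u + d)) = - (Aq d / 2 - (\<Sum>t<N. s t d \<bullet> (Gd *v s t d))) - E1 d"
      using that by (simp add: frobGx E1_def g1z g2e Lgu field_simps)
    have "a (u + d) = frob \<Lambda> (G (u + d)) - (\<Sum>t<N. s t d \<bullet> (Gd *v s t d)) - 2 * \<rho> * q d + errs d"
      unfolding errs_def M0_def M1_def by (rule aform)
    then show ?thesis unfolding fr \<rho>_def by (simp add: field_simps)
  qed
  define K where "K = (\<Sum>t<N. (Cz t)^2 + 2 * Cz t * norm (R t))"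
  have Cz0: "Cz t \<ge> 0" for t by (simp add: Cz_def sum_nonneg)
  have K0: "K \<ge> 0" unfolding K_def using Cz0 by (intro sum_nonneg) simp
  define S where "S M = (\<Sum>k\<in>UNIV. \<Sum>l\<in>UNIV. \<bar>(M::real^'m^'m)$k$l\<bar>)" for M
  have S0: "S M \<ge> 0" for M by (simp add: S_def sum_nonneg)
  have errb: "\<bar>errs d\<bar> \<le> \<eta> * K * (norm d)^2"
    if h0: "S (M0 d) \<le> \<eta>" and h1: "S (M1 d) \<le> \<eta> * norm d" and eta: "\<eta> \<ge> 0" for d \<eta>
  proof -
    have tb: "\<bar>z t d \<bullet> (M0 d *v z t d) - 2 * (z t d \<bullet> (M1 d *v R t))\<bar>
              \<le> \<eta> * ((Cz t)^2 + 2 * Cz t * norm (R t)) * (norm d)^2" for t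
    proof -
      have nz: "norm (z t d) \<le> Cz t * norm d" by (rule Czb)
      have b0: "\<bar>z t d \<bullet> (M0 d *v z t d)\<bar> \<le> \<eta> * (Cz t * norm d) * (Cz t * norm d)"
      proof -
        have "\<bar>z t d \<bullet> (M0 d *v z t d)\<bar> \<le> S (M0 d) * norm (z t d) * norm (z t d)"
          using bilin_bound[of "z t d" "M0 d" "z t d"] by (simp add: S_def)
        also have "\<dots> \<le> \<eta> * (Cz t * norm d) * (Cz t * norm d)"
          by (intro mult_mono h0 nz) (auto simp: S0 eta Cz0)
        finally show ?thesis .
      qed
      have b1: "\<bar>z t d \<bullet> (M1 d *v R t)\<bar> \<le> (\<eta> * norm d) * (Cz t * norm d) * norm (R t)"
      proof -
        have "\<bar>z t d \<bullet> (M1 d *v R t)\<bar> \<le> S (M1 d) * norm (z t d) * norm (R t)"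
          using bilin_bound[of "z t d" "M1 d" "R t"] by (simp add: S_def)
        also have "\<dots> \<le> (\<eta> * norm d) * (Cz t * norm d) * norm (R t)"
          by (intro mult_mono h1 nz) (auto simp: S0 eta Cz0)
        finally show ?thesis .
      qed
      have "\<bar>z t d \<bullet> (M0 d *v z t d) - 2 * (z t d \<bullet> (M1 d *v R t))\<bar>
            \<le> \<bar>z t d \<bullet> (M0 d *v z t d)\<bar> + 2 * \<bar>z t d \<bullet> (M1 d *v R t)\<bar>" by simp
      also have "\<dots> \<le> \<eta> * (Cz t * norm d) * (Cz t * norm d) + 2 * ((\<eta> * norm d) * (Cz t * norm d) * norm (R t))"
        using b0 b1 by simp
      also have "\<dots> = \<eta> * ((Cz t)^2 + 2 * Cz t * norm (R t)) * (norm d)^2"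
        by (simp add: power2_eq_square algebra_simps)
      finally show ?thesis .
    qed
    have "\<bar>errs d\<bar> \<le> (\<Sum>t<N. \<bar>z t d \<bullet> (M0 d *v z t d) - 2 * (z t d \<bullet> (M1 d *v R t))\<bar>)"
      unfolding errs_def by (rule sum_abs)
    also have "\<dots> \<le> (\<Sum>t<N. \<eta> * ((Cz t)^2 + 2 * Cz t * norm (R t)) * (norm d)^2)"
      by (intro sum_mono tb)
    also have "\<dots> = \<eta> * K * (norm d)^2"
      by (simp add: K_def sum_distrib_left sum_distrib_right)
    finally show ?thesis .
  qed
  have pairsum: "(\<Sum>p\<in>UNIV. g p) = (\<Sum>k\<in>UNIV. \<Sum>l\<in>UNIV. g (k, l))" for g :: "'m \<times> 'm \<Rightarrow> real"
    by (simp add: sum.cartesian_product)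
  define \<eta> where "\<eta> = c / (4 * (1 + K))"
  have eta: "\<eta> > 0" using c(1) K0 by (simp add: \<eta>_def)
  obtain \<delta>1 where d1: "\<delta>1 > 0" "\<And>d. norm d < \<delta>1 \<Longrightarrow> \<bar>E1 d\<bar> \<le> \<eta> * (norm d)^2"
    using taylor2_bound[OF Lgp eta, of u] unfolding E1_def by blast
  have M1e: "(M1 d)$k$l = G (u + d)$k$l - G u$k$l - g1fun (\<lambda>y. G y$k$l) d u" for d k l
    by (simp add: M1_def G1_def G0_def g1fun_def Gi_def mpartial_def sum_component)
  have "\<exists>\<delta>>0. \<forall>d::real^'n. norm d < \<delta> \<longrightarrow> (\<Sum>p\<in>UNIV. \<bar>(M1 d)$fst p$snd p\<bar>) \<le> \<eta> * norm d"
  proof (rule small_sum[where I=UNIV and h=norm and F="\<lambda>p d. (M1 d)$fst p$snd p"])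
    show "finite (UNIV :: ('m \<times> 'm) set)" by simp
  next
    fix p :: "'m \<times> 'm" and e :: real assume "p \<in> UNIV" "e > 0"
    then show "\<exists>\<delta>>0. \<forall>d. norm d < \<delta> \<longrightarrow> \<bar>(M1 d)$fst p$snd p\<bar> \<le> e * norm d"
      using taylor1_bound[OF Gkl[of "fst p" "snd p"], of e u] by (simp add: M1e)
  qed (simp_all add: eta)
  then obtain \<delta>2 where d2: "\<delta>2 > 0" "\<And>d. norm d < \<delta>2 \<Longrightarrow> S (M1 d) \<le> \<eta> * norm d"
    by (auto simp: S_def pairsum)
  have "\<exists>\<delta>>0. \<forall>d::real^'n. norm d < \<delta> \<longrightarrow> (\<Sum>p\<in>UNIV. \<bar>(M0 d)$fst p$snd p\<bar>) \<le> \<eta> * 1"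
  proof (rule small_sum[where I=UNIV and h="\<lambda>d. 1" and F="\<lambda>p d. (M0 d)$fst p$snd p"])
    show "finite (UNIV :: ('m \<times> 'm) set)" by simp
  next
    fix p :: "'m \<times> 'm" and e :: real assume "p \<in> UNIV" and e: "e > 0"
    have "isCont (\<lambda>y. G y$fst p$snd p - G0$fst p$snd p) u"
      by (intro continuous_intros polyfun_isCont Gkl)
    then obtain \<delta> where "\<delta> > 0" "\<forall>y. norm (y - u) < \<delta> \<longrightarrow> \<bar>G y$fst p$snd p - G0$fst p$snd p\<bar> < e"
      using cont_small[where F="\<lambda>y. G y$fst p$snd p - G0$fst p$snd p" and u=u and e=e] e
      by (auto simp: G0_def)
    then show "\<exists>\<delta>>0. \<forall>d. norm d < \<delta> \<longrightarrow> \<bar>(M0 d)$fst p$snd p\<bar> \<le> e * 1"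
      by (intro exI[of _ \<delta>]) (auto simp: M0_def less_imp_le)
  qed (simp_all add: eta)
  then obtain \<delta>3 where d3: "\<delta>3 > 0" "\<And>d. norm d < \<delta>3 \<Longrightarrow> S (M0 d) \<le> \<eta>"
    by (auto simp: S_def pairsum)
  define \<delta> where "\<delta> = min \<delta>1 (min \<delta>2 \<delta>3)"
  have dpos: "\<delta> > 0" using d1 d2 d3 by (simp add: \<delta>_def)
  have neg: "a (u + d) < 0" if "d \<noteq> 0" "norm d < \<delta>" "f (u + d) = f u" for d
  proof -
    have nd: "norm d < \<delta>1" "norm d < \<delta>2" "norm d < \<delta>3" using that(2) by (auto simp: \<delta>_def)
    have "a (u + d) = - (Aq d + \<rho>0 * q d) / 2 - E1 d + errs d" by (rule aV[OF that(3)])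
    also have "\<dots> \<le> - (c * (norm d)^2) / 2 + \<eta> * (norm d)^2 + \<eta> * K * (norm d)^2"
    proof -
      have A: "- (Aq d + \<rho>0 * q d) / 2 \<le> - (c * (norm d)^2) / 2" using c(3)[of d] by simp
      have B: "- E1 d \<le> \<eta> * (norm d)^2" using d1(2)[OF nd(1)] by simp
      have C: "errs d \<le> \<eta> * K * (norm d)^2"
        using errb[OF d3(2)[OF nd(3)] d2(2)[OF nd(2)] less_imp_le[OF eta]] by simp
      show ?thesis using A B C by linarith
    qed
    also have "\<dots> = - (c * (norm d)^2) / 4"
    proof -
      have "1 + K > 0" using K0 by simp
      then have e1: "\<eta> * (1 + K) = c / 4" by (simp add: \<eta>_def field_simps)
      have "\<eta> * (norm d)^2 + \<eta> * K * (norm d)^2 = (\<eta> * (1 + K)) * (norm d)^2"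
        by (simp add: algebra_simps)
      then show ?thesis unfolding e1 by simp
    qed
    also have "\<dots> < 0" using c(1) that(1) by simp
    finally show ?thesis .
  qed
  show ?thesis
  proof (intro exI[of _ "ball u \<delta>"] exI[of _ a] conjI)
    show "open (ball u \<delta>)" by simp
    show "u \<in> ball u \<delta>" using dpos by simp
    show "a \<in> QM G" by (rule aQM)
    show "{x. a x \<ge> 0} \<inter> {x. f x = fmin f G} \<inter> ball u \<delta> \<subseteq> feas G"
    proof
      fix x assume x: "x \<in> {x. a x \<ge> 0} \<inter> {x. f x = fmin f G} \<inter> ball u \<delta>"
      define d where "d = x - u"
      have xd: "x = u + d" by (simp add: d_def)
      have "d = 0"
      proof (rule ccontr)
        assume "d \<noteq> 0"
        moreover have "norm d < \<delta>" using x by (simp add: d_def dist_norm norm_minus_commute)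
        moreover have "f (u + d) = f u" using x fu by (simp add: xd)
        ultimately have "a x < 0" using neg xd by simp
        then show False using x by simp
      qed
      then show "x \<in> feas G" using uf xd by simp
    qed
  qed
qed

theorem theorem4p6:
  fixes f :: "real^'n \<Rightarrow> real" and G :: "real^'n \<Rightarrow> real^'m^'m"
    and u :: "real^'n" and \<Lambda> E :: "real^'m^'m"
  assumes "f \<in> polyfun" and "polymat_sym G"
    and "bdd_below (f ` feas G)"
    and "local_minimizer f G u"
    and "kernel_cols (G u) E"
    and "NDC G u E"
    and "KKT f G u \<Lambda>"
    and "SCC G u \<Lambda>"
    and "SOSC f G u \<Lambda> E"
  shows "\<exists>U a. open U \<and> u \<in> U \<and> a \<in> QM G \<and>
           {x. a x \<ge> 0} \<inter> {x. f x = fmin f G} \<inter> U \<subseteq> feas G"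
proof (cases "f u = fmin f G")
  case True
  show ?thesis by (rule main_case[OF assms(1,2,4,5,7,8,9) True])
next
  case False
  define U where "U = {x. f x \<noteq> fmin f G}"
  have "open U" unfolding U_def
    by (rule open_Collect_neq[OF polyfun_cont[OF assms(1)] continuous_on_const])
  moreover have "u \<in> U" using False by (simp add: U_def)
  moreover have "(\<lambda>x. 0) \<in> QM G"
  proof -
    have sos0: "(\<lambda>x::real^'n. 0) \<in> SOS" unfolding SOS_def
      by (rule CollectI, rule exI[of _ "0::nat"]) simp
    show ?thesis unfolding QM_def
      by (rule CollectI, rule exI[of _ "\<lambda>x. 0"], rule exI[of _ "0::nat"]) (simp add: sos0)
  qed
  moreover have "{x. (0::real) \<ge> 0} \<inter> {x. f x = fmin f G} \<inter> U \<subseteq> feas G"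
    by (auto simp: U_def)
  ultimately show ?thesis by blast
qed

end
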